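(* Under the model described in the context, with the improper prior $f(\textbf{q})=1$ on the bypass location parameters $\textbf{q}\in\mathbb{R}^N$, the posterior distribution of $(\bm{\zeta}^{\prime},\textbf{q}^{\prime})^{\prime}$ given $\textbf{z}$ is $$(\bm{\zeta}^{\prime},\textbf{q}^{\prime})^{\prime}\mid\textbf{z}\sim\mathrm{GCM}(\bm{\alpha}_{M},\bm{\kappa}_{M},\bm{\mu}_{M},\textbf{V}_{M},\pi,\textbf{D};\bm{\psi}_{M}),$$ with $\textbf{V}_{M}^{-1}=(\textbf{H},\textbf{Q})$ and $\bm{\mu}_{M}=\begin{pmatrix}(\textbf{H}^{\prime}\textbf{H})^{-1}\textbf{H}^{\prime}\\ \textbf{Q}^{\prime}\end{pmatrix}\textbf{c}$, i.e. $\textbf{V}_M\textbf{c}$, where $\textbf{c}=(\bm{0}_{1,n_{1}+n_{2}+n_{3}},\textbf{z}_{4}^{\prime},\bm{0}_{1,N+p+r})^{\prime}$; that is, the posterior density of $(\bm\zeta,\textbf q)$ is proportional to $\int_\Omega \frac{\pi(\bm\theta)}{|\det \textbf D(\bm\theta)|}\exp[\bm{\alpha}_{M}^{\prime}\textbf{D}(\bm{\theta})^{-1}\{(\textbf{H},\textbf{Q})(\bm\zeta',\textbf q')'-\textbf c\}-\bm{\kappa}_{M}^{\prime}\bm{\psi}_{M}(\textbf{D}(\bm{\theta})^{-1}\{(\textbf{H},\textbf{Q})(\bm\zeta',\textbf q')'-\textbf c\})]d\bm\theta$, and it is exactly that GCM density.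
   Context: Notation: $\bm{0}_{a,b}$, $\bm{1}_{a,b}$ are the $a\times b$ zero and ones matrices, $\textbf{I}_n$ the identity, $\mathrm{blkdiag}$ the block-diagonal operator. $\psi_1(x)=x^2$, $\psi_2(x)=e^x$, $\psi_3(x)=\log(1+e^x)$, $\psi_4(x)=\log(1+x^2/\nu)$ with known $\nu>0$. A univariate DY density with unit log-partition $\psi$ and parameters $(\alpha,\kappa)$ is $\mathcal{N}(\alpha,\kappa)\exp\{\alpha w-\kappa\psi(w)\}$ ($\mathcal N$ the normalizing constant). $\mathrm{GCM}(\bm{\alpha},\bm{\kappa},\bm{\mu},\textbf{V},\pi,\textbf{D};\bm{\psi})$ on $\mathbb{R}^M$ denotes the law of $\bm{\mu}+\textbf{V}\textbf{D}(\bm{\theta})\textbf{w}$, where $\bm\theta\in\Omega$ has proper density $\pi$, $\textbf D(\bm\theta)$ is invertible, $\textbf V$ invertible, and $\textbf w$ (independent of $\bm\theta$) has independent coordinates, coordinate $l$ having DY density with parameters $(\alpha_l,\kappa_l)$ and unit log-partition $\psi_{(l)}$, where $\bm\psi=(\psi_{(1)},\ldots,\psi_{(M)})$ acts coordinatewise; its density is $\int_\Omega\pi(\bm\theta)\frac{\prod_l\mathcal N(\alpha_l,\kappa_l)}{|\det\textbf D(\bm\theta)||\det\textbf V|}\exp[\bm\alpha'\textbf D(\bm\theta)^{-1}\textbf V^{-1}(\textbf y-\bm\mu)-\bm\kappa'\bm\psi\{\textbf D(\bm\theta)^{-1}\textbf V^{-1}(\textbf y-\bm\mu)\}]d\bm\theta$.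 Model: data $\textbf{z}=(\textbf{z}_1',\ldots,\textbf{z}_4')'$, $\textbf{z}_k=(Z_{k,1},\ldots,Z_{k,n_k})'$, $N=n_1+\cdots+n_4$, latent $\textbf{y}_k=(Y_{k,1},\ldots,Y_{k,n_k})'$; conditionally independently, $Z_{1,i}\mid Y_{1,i}\sim N(Y_{1,i},\sigma_i^2)$ with $\sigma_i^2>0$ known, $Z_{2,i}\mid Y_{2,i}\sim\mathrm{Poisson}(e^{Y_{2,i}})$, $Z_{3,i}\mid Y_{3,i}\sim\mathrm{Binomial}(m_i,e^{Y_{3,i}}/(1+e^{Y_{3,i}}))$ with known $\textbf m=(m_1,\ldots,m_{n_3})'$, and $Z_{4,i}\mid Y_{4,i}$ has density proportional to $\{1+(Z_{4,i}-Y_{4,i})^2/\nu\}^{-(\nu+1)/2}$. $\textbf{D}_\sigma=\mathrm{diag}(1/\sigma_i^2)$. With known $\textbf X_k$ ($n_k\times p$), $\textbf G_k$ ($n_k\times r$), $\textbf X=(\textbf X_1',\ldots,\textbf X_4')'$, $\textbf G=(\textbf G_1',\ldots,\textbf G_4')'$, set $\textbf y=(\textbf y_1',\ldots,\textbf y_4')'=\textbf X\bm\beta+\textbf G\bm\eta+\bm\xi-\bm\mu_D$, where $\bm\mu_D=(\bm\mu_1',\ldots,\bm\mu_4')'\in\mathbb R^N$, and $\bm\zeta=(\bm\xi',\bm\beta',\bm\eta')'\in\mathbb R^{N+p+r}$. Let $\bm\theta\in\Omega$ have proper prior $\pi$, with invertible $\textbf D_\beta(\bm\theta)$ ($p\times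 p$) and $\textbf D_\eta(\bm\theta)$ ($r\times r$). Prior factor for $\bm\beta$: $|\det\textbf D_\beta(\bm\theta)|^{-1}\exp[\bm\alpha_\beta'\textbf D_\beta(\bm\theta)^{-1}(\bm\beta-\bm\mu_\beta)-\bm\kappa_\beta'\bm\psi_\beta\{\textbf D_\beta(\bm\theta)^{-1}(\bm\beta-\bm\mu_\beta)\}]$ with known $\bm\alpha_\beta,\bm\kappa_\beta$ and coordinatewise DY unit log-partitions $\bm\psi_\beta$; analogously for $\bm\eta$ with $\textbf D_\eta,\bm\mu_\eta,\bm\alpha_\eta,\bm\kappa_\eta,\bm\psi_\eta$. Prior factor for $\bm\xi$ (fixed $\sigma_\xi^2>0$, $\alpha_\xi>0$): $\exp[\bm\alpha_\xi'(\textbf A\bm\zeta-\textbf m_\xi)-\bm\kappa_\xi'\bm\psi_\xi(\textbf A\bm\zeta-\textbf m_\xi)]$ with $\textbf A=\begin{pmatrix}\textbf I_N&\textbf X&\textbf G\\ \sigma_\xi^{-2}\textbf I_N&\bm 0_{N,p}&\bm 0_{N,r}\end{pmatrix}$, $\textbf m_\xi=(\bm\mu_D',\bm\mu_\xi')'$, $\bm\alpha_\xi=(\bm 0_{1,n_1},\alpha_\xi\bm 1_{1,n_2},\alpha_\xi\bm 1_{1,n_3},\bm 0_{1,n_4+N})'$, $\bm\kappa_\xi=(\bm 0_{1,n_1+n_2},2\alpha_\xi\bm 1_{1,n_3},\bm 0_{1,n_4},\frac12\bm 1_{1,N})'$, and $\bm\psi_\xi$ applying $\psi_k$ to the $k$-th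 block of the first $N$ coordinates and $\psi_1$ to the last $N$. Let $\textbf H=\begin{pmatrix}\textbf I_N&\textbf X&\textbf G\\ \bm0_{p,N}&\textbf I_p&\bm0_{p,r}\\ \bm0_{r,N}&\bm0_{r,p}&\textbf I_r\\ \textbf I_N&\bm0_{N,p}&\bm0_{N,r}\end{pmatrix}$ ($(2N+p+r)\times(N+p+r)$) and $\textbf Q$ a $(2N+p+r)\times N$ matrix with orthonormal columns satisfying $\textbf H'\textbf Q=\bm0$ (so $\textbf Q\textbf Q'=\textbf I-\textbf H(\textbf H'\textbf H)^{-1}\textbf H'$). Let $\textbf D(\bm\theta)^{-1}=\mathrm{blkdiag}(\textbf I_N,\textbf D_\beta(\bm\theta)^{-1},\textbf D_\eta(\bm\theta)^{-1},\sigma_\xi^{-2}\textbf I_N)$. The location parameters satisfy $(\bm\mu_D',\bm\mu_\beta',\bm\mu_\eta',\bm\mu_\xi')'=-\textbf D(\bm\theta)^{-1}\textbf Q\textbf q$ for the bypass location parameter $\textbf q\in\mathbb R^N$. The posterior is defined by $f(\bm\zeta,\textbf q\mid\textbf z)\propto\int_\Omega\pi(\bm\theta)f(\textbf z\mid\bm\zeta,\textbf q)\,[\bm\xi\text{ factor}][\bm\beta\text{ factor}][\bm\eta\text{ factor}]f(\textbf q)\,d\bm\theta$. Parameters: $\bm\alpha_M=(\textbf z_1'\textbf D_\sigma,\textbf z_2'+\alpha_\xi\bm1_{1,n_2},\textbf z_3'+\alpha_\xi\bm1_{1,n_3},\bm0_{1,n_4},\bm\alpha_\beta',\bm\alpha_\eta',\bm0_{1,N})'$,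 $\bm\kappa_M=(\frac12\bm1_{1,n_1}\textbf D_\sigma,\bm1_{1,n_2},\textbf m'+2\alpha_\xi\bm1_{1,n_3},\frac{\nu+1}2\bm1_{1,n_4},\bm\kappa_\beta',\bm\kappa_\eta',\frac12\bm1_{1,N})'$, and $\bm\psi_M$ applies $\psi_k$ to the $k$-th data block of the first $N$ coordinates, $\bm\psi_\beta$ to the next $p$, $\bm\psi_\eta$ to the next $r$, and $\psi_1$ to the last $N$. *)

theory Defs
  imports "Jordan_Normal_Form.Gauss_Jordan_Elimination" "Jordan_Normal_Form.Determinant"
          "HOL-Analysis.Lebesgue_Measure"
begin

hide_type (open) Finite_Cartesian_Product.vec
hide_const (open) Finite_Cartesian_Product.vec Finite_Cartesian_Product.vec_nth
no_notation Finite_Cartesian_Product.vec_nth (infixl \<open>$\<close> 90)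

definition minv :: "real mat \<Rightarrow> real mat" where
  "minv A = the (mat_inverse A)"

definition hcat :: "real mat \<Rightarrow> real mat \<Rightarrow> real mat" where
  "hcat A B = four_block_mat A B (0\<^sub>m 0 (dim_col A)) (0\<^sub>m 0 (dim_col B))"

definition psi_vec :: "(nat \<Rightarrow> real \<Rightarrow> real) \<Rightarrow> real vec \<Rightarrow> real vec" where
  "psi_vec psis w = vec (dim_vec w) (\<lambda>l. psis l (w $ l))"

definition psi1 :: "real \<Rightarrow> real" where "psi1 x = x\<^sup>2"
definition psi2 :: "real \<Rightarrow> real" where "psi2 x = exp x"
definition psi3 :: "real \<Rightarrow> real" where "psi3 x = ln (1 + exp x)"
definition psi4 :: "real \<Rightarrow> real \<Rightarrow> real" where "psi4 \<nu> x = ln (1 + x\<^sup>2 / \<nu>)"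

definition dy_kernel :: "(real \<Rightarrow> real) \<Rightarrow> real \<Rightarrow> real \<Rightarrow> real \<Rightarrow> real" where
  "dy_kernel psi a k w = exp (a * w - k * psi w)"

definition dy_valid :: "(real \<Rightarrow> real) \<Rightarrow> real \<Rightarrow> real \<Rightarrow> bool" where
  "dy_valid psi a k \<longleftrightarrow> integrable lborel (dy_kernel psi a k)"

definition dy_norm :: "(real \<Rightarrow> real) \<Rightarrow> real \<Rightarrow> real \<Rightarrow> real" where
  "dy_norm psi a k = 1 / (\<integral>w. dy_kernel psi a k w \<partial>lborel)"

text \<open>Density of GCM(alpha, kappa, mu, V, pi, D; psis) at y, where theta ranges over
  the space of the measure M (Omega) and pi is a density w.r.t. M.\<close>
definition gcm_density ::
  "'t measure \<Rightarrow> ('t \<Rightarrow> real) \<Rightarrow> real vec \<Rightarrow> real vec \<Rightarrow> real vec \<Rightarrow> real mat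
   \<Rightarrow> ('t \<Rightarrow> real mat) \<Rightarrow> (nat \<Rightarrow> real \<Rightarrow> real) \<Rightarrow> real vec \<Rightarrow> real" where
  "gcm_density M dens alpha kappa mu V D psis y =
     (\<integral>\<theta>. (let w = minv (D \<theta>) *\<^sub>v (minv V *\<^sub>v (y - mu)) in
        dens \<theta> * (\<Prod>l<dim_vec alpha. dy_norm (psis l) (alpha $ l) (kappa $ l))
          / (\<bar>det (D \<theta>)\<bar> * \<bar>det V\<bar>)
          * exp (scalar_prod alpha w - scalar_prod kappa (psi_vec psis w))) \<partial>M)"

definition dy_prior_factor ::
  "real mat \<Rightarrow> real vec \<Rightarrow> real vec \<Rightarrow> real vec \<Rightarrow> (nat \<Rightarrow> real \<Rightarrow> real) \<Rightarrow> real vec \<Rightarrow> real" where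
  "dy_prior_factor Dm mu a k psis x =
     (let w = minv Dm *\<^sub>v (x - mu) in
      exp (scalar_prod a w - scalar_prod k (psi_vec psis w)) / \<bar>det Dm\<bar>)"

definition normal_pdf :: "real \<Rightarrow> real \<Rightarrow> real \<Rightarrow> real" where
  "normal_pdf mean var x = exp (- (x - mean)\<^sup>2 / (2 * var)) / sqrt (2 * pi * var)"

definition poisson_pmf :: "real \<Rightarrow> nat \<Rightarrow> real" where
  "poisson_pmf lam k = exp (- lam) * lam ^ k / fact k"

definition binomial_pmf_real :: "nat \<Rightarrow> real \<Rightarrow> nat \<Rightarrow> real" where
  "binomial_pmf_real m p k = real (m choose k) * p ^ k * (1 - p) ^ (m - k)"

definition t_kernel :: "real \<Rightarrow> real \<Rightarrow> real" where
  "t_kernel \<nu> u = (1 + u\<^sup>2 / \<nu>) powr (- (\<nu> + 1) / 2)"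

definition t_pdf :: "real \<Rightarrow> real \<Rightarrow> real \<Rightarrow> real" where
  "t_pdf \<nu> loc x = t_kernel \<nu> (x - loc) / (\<integral>u. t_kernel \<nu> u \<partial>lborel)"

text \<open>Coordinates: blocks of sizes n1,n2,n3,n4 (N = n1+n2+n3+n4), 0-based indices.\<close>

definition H_mat :: "nat \<Rightarrow> nat \<Rightarrow> nat \<Rightarrow> real mat \<Rightarrow> real mat \<Rightarrow> real mat" where
  "H_mat N p r X G =
     hcat (1\<^sub>m N) (hcat X G)
     @\<^sub>r hcat (0\<^sub>m p N) (hcat (1\<^sub>m p) (0\<^sub>m p r))
     @\<^sub>r hcat (0\<^sub>m r N) (hcat (0\<^sub>m r p) (1\<^sub>m r))
     @\<^sub>r hcat (1\<^sub>m N) (hcat (0\<^sub>m N p) (0\<^sub>m N r))"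

definition A_mat :: "nat \<Rightarrow> nat \<Rightarrow> nat \<Rightarrow> real mat \<Rightarrow> real mat \<Rightarrow> real \<Rightarrow> real mat" where
  "A_mat N p r X G s2xi =
     hcat (1\<^sub>m N) (hcat X G)
     @\<^sub>r hcat ((1 / s2xi) \<cdot>\<^sub>m 1\<^sub>m N) (hcat (0\<^sub>m N p) (0\<^sub>m N r))"

definition D_mat :: "nat \<Rightarrow> real mat \<Rightarrow> real mat \<Rightarrow> real \<Rightarrow> real mat" where
  "D_mat N Db De s2xi = diag_block_mat [1\<^sub>m N, Db, De, s2xi \<cdot>\<^sub>m 1\<^sub>m N]"

definition psi_xi :: "nat \<Rightarrow> nat \<Rightarrow> nat \<Rightarrow> nat \<Rightarrow> real \<Rightarrow> nat \<Rightarrow> real \<Rightarrow> real" where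
  "psi_xi n1 n2 n3 N \<nu> l =
     (if l < n1 then psi1 else if l < n1 + n2 then psi2 else if l < n1 + n2 + n3 then psi3
      else if l < N then psi4 \<nu> else psi1)"

definition psi_M :: "nat \<Rightarrow> nat \<Rightarrow> nat \<Rightarrow> nat \<Rightarrow> nat \<Rightarrow> nat \<Rightarrow> real
    \<Rightarrow> (nat \<Rightarrow> real \<Rightarrow> real) \<Rightarrow> (nat \<Rightarrow> real \<Rightarrow> real) \<Rightarrow> nat \<Rightarrow> real \<Rightarrow> real" where
  "psi_M n1 n2 n3 N p r \<nu> psib psie l =
     (if l < n1 then psi1 else if l < n1 + n2 then psi2 else if l < n1 + n2 + n3 then psi3
      else if l < N then psi4 \<nu> else if l < N + p then psib (l - N)
      else if l < N + p + r then psie (l - N - p) else psi1)"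

text \<open>Likelihood f(z | zeta, q) as a function of the latent vector y (length N).\<close>
definition likelihood ::
  "nat \<Rightarrow> nat \<Rightarrow> nat \<Rightarrow> nat \<Rightarrow> real vec \<Rightarrow> nat vec \<Rightarrow> nat vec \<Rightarrow> real vec
   \<Rightarrow> real vec \<Rightarrow> nat vec \<Rightarrow> real \<Rightarrow> real vec \<Rightarrow> real" where
  "likelihood n1 n2 n3 n4 z1 z2 z3 z4 sigma2 m \<nu> y =
     (\<Prod>i<n1. normal_pdf (y $ i) (sigma2 $ i) (z1 $ i))
     * (\<Prod>i<n2. poisson_pmf (exp (y $ (n1 + i))) (z2 $ i))
     * (\<Prod>i<n3. binomial_pmf_real (m $ i)
          (exp (y $ (n1 + n2 + i)) / (1 + exp (y $ (n1 + n2 + i)))) (z3 $ i))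
     * (\<Prod>i<n4. t_pdf \<nu> (y $ (n1 + n2 + n3 + i)) (z4 $ i))"

end

theory Submission imports Defs "HOL-Analysis.Analysis" begin
hide_type (open) Finite_Cartesian_Product.vec
hide_const (open) Finite_Cartesian_Product.vec Finite_Cartesian_Product.vec_nth
no_notation Finite_Cartesian_Product.vec_nth (infixl \<open>$\<close> 90)
hide_const (open) Determinants.det

lemma setint_from_hk:
  fixes f :: "real \<Rightarrow> real"
  assumes "f integrable_on {c..}" "\<And>x. 0 \<le> f x" "f \<in> borel_measurable borel"
  shows "integrable lborel (\<lambda>x. indicator {c..} x * f x)"
proof -
  have "f absolutely_integrable_on {c..}"
    by (rule nonnegative_absolutely_integrable_1) (use assms in auto)
  hence "integrable lebesgue (\<lambda>x. indicator {c..} x *\<^sub>R f x)" by (simp add: set_integrable_def)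
  hence "integrable (completion lborel) (\<lambda>x. indicator {c..} x * f x)" by simp
  moreover have "(\<lambda>x. indicator {c..} x * f x) \<in> borel_measurable lborel"
    using assms(3) by measurable
  ultimately show ?thesis using integrable_completion by blast
qed

lemma integrable_powr_decay:
  fixes s :: real assumes s: "s > 1"
  shows "integrable lborel (\<lambda>x. (1 + \<bar>x\<bar>) powr (-s))"
proof -
  have "(\<lambda>x::real. x powr (-s)) integrable_on {1..}"
    using has_integral_powr_to_inf[of "-s" 1] s unfolding integrable_on_def by auto
  hence h: "integrable lborel (\<lambda>x. indicator {1..} x * x powr (-s))"
    by (rule setint_from_hk) auto
  have h1: "integrable lborel (\<lambda>x. indicator {1..} (1 + 1 * x) * (1 + 1 * x) powr (-s))"
    using lborel_integrable_real_affine_iff[of 1 "\<lambda>x. indicator {1..} x * x powr (-s)" 1] h by simp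
  have h2: "integrable lborel (\<lambda>x. indicator {1..} (1 + (-1) * x) * (1 + (-1) * x) powr (-s))"
    using lborel_integrable_real_affine_iff[of "-1" "\<lambda>x. indicator {1..} x * x powr (-s)" 1] h by simp
  have hs: "integrable lborel (\<lambda>x. indicator {1..} (1 + 1 * x) * (1 + 1 * x) powr (-s)
       + indicator {1..} (1 + (-1) * x) * (1 + (-1) * x) powr (-s))"
    using h1 h2 by (rule Bochner_Integration.integrable_add)
  show ?thesis
  proof (rule Bochner_Integration.integrable_bound[OF hs])
    show "(\<lambda>x. (1 + \<bar>x\<bar>) powr (-s)) \<in> borel_measurable lborel" by measurable
    show "AE x in lborel. norm ((1 + \<bar>x\<bar>) powr (-s)) \<le> norm (indicator {1..} (1 + 1 * x) * (1 + 1 * x) powr (-s)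
       + indicator {1..} (1 + (-1) * x) * (1 + (-1) * x) powr (-s))"
    proof (rule AE_I2)
      fix x :: real
      show "norm ((1 + \<bar>x\<bar>) powr (-s)) \<le> norm (indicator {1..} (1 + 1 * x) * (1 + 1 * x) powr (-s)
       + indicator {1..} (1 + (-1) * x) * (1 + (-1) * x) powr (-s))"
        by (cases "x \<ge> 0") (auto simp: indicator_def)
    qed
  qed
qed

lemma integrable_dominated_decay:
  fixes f :: "real \<Rightarrow> real"
  assumes "f \<in> borel_measurable lborel" "s > 1" "\<And>x. \<bar>f x\<bar> \<le> C * (1 + \<bar>x\<bar>) powr (-s)"
  shows "integrable lborel f"
proof (rule Bochner_Integration.integrable_bound)
  show "integrable lborel (\<lambda>x. C * (1 + \<bar>x\<bar>) powr (-s))"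
    using integrable_powr_decay[OF assms(2)] by simp
  show "AE x in lborel. norm (f x) \<le> norm (C * (1 + \<bar>x\<bar>) powr (-s))"
    using assms(3) by (auto intro!: AE_I2 order_trans[OF _ abs_ge_self])
qed (use assms in auto)

lemma integral_pos_lborel:
  fixes f :: "real \<Rightarrow> real"
  assumes "integrable lborel f" "\<And>x. f x > 0"
  shows "(\<integral>x. f x \<partial>lborel) > 0"
proof -
  have ge: "(\<integral>x. f x \<partial>lborel) \<ge> 0" by (intro Bochner_Integration.integral_nonneg) (simp add: assms(2) less_imp_le)
  have "(\<integral>x. f x \<partial>lborel) \<noteq> 0"
  proof
    assume "(\<integral>x. f x \<partial>lborel) = 0"
    moreover have "AE x in lborel. 0 \<le> f x" using assms(2) by (simp add: less_imp_le)
    ultimately have "AE x in lborel. f x = 0"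
      using integral_nonneg_eq_0_iff_AE[OF assms(1)] by blast
    hence "AE x::real in lborel. False" using less_imp_neq[OF assms(2), THEN not_sym] by simp
    thus False using ae_filter_eq_bot_iff[of "lborel::real measure"] trivial_limit_def[of "ae_filter (lborel::real measure)"] by (simp add: emeasure_lborel_UNIV)
  qed
  with ge show ?thesis by simp
qed

lemma ln_linear_bound:
  fixes x \<delta> :: real assumes "\<delta> > 0" "x \<ge> 0"
  shows "ln (1 + x) \<le> \<delta> * x + \<delta> - 1 - ln \<delta>"
proof -
  have "ln (\<delta> * (1 + x)) \<le> \<delta> * (1 + x) - 1" using assms by (intro ln_le_minus_one) auto
  moreover have "ln (\<delta> * (1 + x)) = ln \<delta> + ln (1 + x)" using assms by (simp add: ln_mult)
  ultimately show ?thesis by (simp add: algebra_simps)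
qed

lemma exp_decay_powr:
  fixes M \<epsilon> :: real assumes "\<epsilon> > 0"
  shows "\<exists>C. \<forall>w::real. exp (M - \<epsilon> * \<bar>w\<bar>) \<le> C * (1 + \<bar>w\<bar>) powr (-2)"
proof -
  define \<delta> where "\<delta> = \<epsilon> / 2"
  define K where "K = \<delta> - 1 - ln \<delta>"
  have d: "\<delta> > 0" using assms by (simp add: \<delta>_def)
  show ?thesis
  proof (intro exI allI)
    fix w :: real
    have l: "ln (1 + \<bar>w\<bar>) \<le> \<delta> * \<bar>w\<bar> + K" using ln_linear_bound[OF d, of "\<bar>w\<bar>"] by (simp add: K_def)
    have "(1 + \<bar>w\<bar>) powr (-2) = exp (-2 * ln (1 + \<bar>w\<bar>))" by (simp add: powr_def)
    hence "exp (M + 2 * K) * (1 + \<bar>w\<bar>) powr (-2) = exp (M + 2 * K - 2 * ln (1 + \<bar>w\<bar>))"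
      by (simp add: exp_add[symmetric])
    moreover have "M - \<epsilon> * \<bar>w\<bar> \<le> M + 2 * K - 2 * ln (1 + \<bar>w\<bar>)" using l by (simp add: \<delta>_def)
    ultimately show "exp (M - \<epsilon> * \<bar>w\<bar>) \<le> exp (M + 2 * K) * (1 + \<bar>w\<bar>) powr (-2)" by simp
  qed
qed

lemma integrable_exp_decay:
  fixes e :: "real \<Rightarrow> real"
  assumes meas: "(\<lambda>w. exp (e w)) \<in> borel_measurable lborel" and eps: "\<epsilon> > 0"
    and bd: "\<And>w. e w \<le> M - \<epsilon> * \<bar>w\<bar>"
  shows "integrable lborel (\<lambda>w. exp (e w))"
proof -
  obtain C where C: "\<And>w::real. exp (M - \<epsilon> * \<bar>w\<bar>) \<le> C * (1 + \<bar>w\<bar>) powr (-2)"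
    using exp_decay_powr[OF eps, of M] by blast
  show ?thesis
  proof (rule integrable_dominated_decay[OF meas, of 2 C])
    fix x :: real
    have "exp (e x) \<le> exp (M - \<epsilon> * \<bar>x\<bar>)" using bd[of x] by simp
    thus "\<bar>exp (e x)\<bar> \<le> C * (1 + \<bar>x\<bar>) powr (-2)" using C[of x] by (simp only: abs_exp_cancel)
  qed simp
qed

lemma dy_norm_pos:
  assumes "integrable lborel (dy_kernel psi a k)"
  shows "dy_norm psi a k > 0"
proof -
  have "(\<integral>w. dy_kernel psi a k w \<partial>lborel) > 0"
    by (rule integral_pos_lborel[OF assms]) (simp add: dy_kernel_def)
  thus ?thesis by (simp add: dy_norm_def)
qed

lemma t_kernel_eq:
  assumes "\<nu> > 0" shows "t_kernel \<nu> = dy_kernel (psi4 \<nu>) 0 ((\<nu> + 1) / 2)"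
proof
  fix u
  have "0 < 1 + u\<^sup>2 / \<nu>" using assms by (simp add: add_pos_nonneg)
  thus "t_kernel \<nu> u = dy_kernel (psi4 \<nu>) 0 ((\<nu> + 1) / 2) u"
    by (simp add: t_kernel_def dy_kernel_def psi4_def powr_def algebra_simps)
qed

lemma cont_meas:
  fixes f :: "real \<Rightarrow> real"
  assumes "continuous_on UNIV f" shows "f \<in> borel_measurable lborel"
  using borel_measurable_continuous_onI[OF assms] by simp

lemma int_psi1:
  fixes a k :: real assumes k: "k > 0"
  shows "integrable lborel (dy_kernel psi1 a k)"
proof -
  have "integrable lborel (\<lambda>w. exp (a * w - k * w\<^sup>2))"
  proof (rule integrable_exp_decay[where \<epsilon>=1 and M="(\<bar>a\<bar>+1)\<^sup>2 / (4*k)"])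
    fix w :: real
    have "0 \<le> k * (\<bar>w\<bar> - (\<bar>a\<bar>+1)/(2*k))\<^sup>2" using k by simp
    also have "k * (\<bar>w\<bar> - (\<bar>a\<bar>+1)/(2*k))\<^sup>2 = k * w\<^sup>2 - (\<bar>a\<bar>+1) * \<bar>w\<bar> + (\<bar>a\<bar>+1)\<^sup>2 / (4*k)"
      using k by (simp add: power2_eq_square field_simps)
    finally have "(\<bar>a\<bar>+1) * \<bar>w\<bar> - k * w\<^sup>2 \<le> (\<bar>a\<bar>+1)\<^sup>2 / (4*k)" by simp
    moreover have "a * w \<le> \<bar>a\<bar> * \<bar>w\<bar>" by (metis abs_ge_self abs_mult)
    ultimately show "a * w - k * w\<^sup>2 \<le> (\<bar>a\<bar>+1)\<^sup>2 / (4*k) - 1 * \<bar>w\<bar>" by (simp add: algebra_simps)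
  qed (rule cont_meas, intro continuous_intros, simp)
  moreover have "dy_kernel psi1 a k = (\<lambda>w. exp (a * w - k * w\<^sup>2))" by (rule ext) (simp add: dy_kernel_def psi1_def)
  ultimately show ?thesis by simp
qed


lemma int_psi2:
  fixes a :: real assumes a: "a > 0"
  shows "integrable lborel (dy_kernel psi2 a 1)"
proof -
  have "integrable lborel (\<lambda>w. exp (a * w - exp w))"
  proof (rule integrable_exp_decay[where \<epsilon>=a and M="(1 - 2*a)\<^sup>2"])
    fix w :: real
    show "a * w - exp w \<le> (1 - 2*a)\<^sup>2 - a * \<bar>w\<bar>"
    proof (cases "w \<ge> 0")
      case True
      have e1: "1 + w/2 \<le> exp (w/2)" by (rule exp_ge_add_one_self)
      have "(1 + w/2)\<^sup>2 \<le> (exp (w/2))\<^sup>2" using True e1 by (intro power_mono) auto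
      also have "(exp (w/2))\<^sup>2 = exp w" by (simp add: power2_eq_square exp_add[symmetric])
      finally have "(1 + w/2)\<^sup>2 \<le> exp w" .
      moreover have "0 \<le> (w/2 - (2*a - 1))\<^sup>2" by simp
      ultimately show ?thesis using True by (simp add: power2_eq_square algebra_simps)
    next
      case False
      have "0 < exp w" by simp
      moreover have "a * \<bar>w\<bar> = -(a * w)" using False by simp
      moreover have "0 \<le> (1 - 2*a)\<^sup>2" by simp
      ultimately show ?thesis by linarith
    qed
  qed (rule cont_meas, (intro continuous_intros; simp add: add_pos_nonneg), use a in simp)
  moreover have "dy_kernel psi2 a 1 = (\<lambda>w. exp (a * w - exp w))" by (rule ext) (simp add: dy_kernel_def psi2_def)
  ultimately show ?thesis by simp
qed

lemma int_psi3:
  fixes a k :: real assumes a: "a > 0" "a < k"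
  shows "integrable lborel (dy_kernel psi3 a k)"
proof -
  have "integrable lborel (\<lambda>w. exp (a * w - k * ln (1 + exp w)))"
  proof (rule integrable_exp_decay[where \<epsilon>="min a (k - a)" and M=0])
    fix w :: real
    show "a * w - k * ln (1 + exp w) \<le> 0 - min a (k - a) * \<bar>w\<bar>"
    proof (cases "w \<ge> 0")
      case True
      have "ln (exp w) \<le> ln (1 + exp w)" by (subst ln_le_cancel_iff) (auto simp: add_pos_pos)
      hence l: "w \<le> ln (1 + exp w)" by simp
      have "k * w \<le> k * ln (1 + exp w)" using l a by (intro mult_left_mono) auto
      moreover have "min a (k - a) * \<bar>w\<bar> \<le> (k - a) * \<bar>w\<bar>" by (intro mult_right_mono) auto
      moreover have "(k - a) * \<bar>w\<bar> = k * w - a * w" using True by (simp add: algebra_simps)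
      ultimately show ?thesis by linarith
    next
      case False
      have l: "0 \<le> ln (1 + exp w)" by simp
      have "0 \<le> k * ln (1 + exp w)" using l a by simp
      moreover have "min a (k - a) * \<bar>w\<bar> \<le> a * \<bar>w\<bar>" by (intro mult_right_mono) auto
      moreover have "a * \<bar>w\<bar> = - (a * w)" using False by simp
      ultimately show ?thesis by linarith
    qed
  next
    have "\<And>x::real. 0 < 1 + exp x" by (simp add: add_pos_pos)
    hence "continuous_on UNIV (\<lambda>w. exp (a * w - k * ln (1 + exp w)))"
      by (intro continuous_intros) (auto simp: less_imp_neq[THEN not_sym])
    thus "(\<lambda>w. exp (a * w - k * ln (1 + exp w))) \<in> borel_measurable lborel" by (rule cont_meas)
  qed (use a in simp)
  moreover have "dy_kernel psi3 a k = (\<lambda>w. exp (a * w - k * ln (1 + exp w)))" by (rule ext) (simp add: dy_kernel_def psi3_def)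
  ultimately show ?thesis by simp
qed


lemma int_psi4:
  fixes \<nu> :: real assumes nu: "\<nu> > 0"
  shows "integrable lborel (dy_kernel (psi4 \<nu>) 0 ((\<nu> + 1) / 2))"
proof -
  define k where "k = (\<nu> + 1) / 2"
  define c where "c = 2 * max 1 \<nu>"
  have c: "c > 0" by (simp add: c_def)
  have k0: "k \<ge> 0" using nu by (simp add: k_def)
  have "integrable lborel (\<lambda>w. exp (- k * ln (1 + w\<^sup>2 / \<nu>)))"
  proof (rule integrable_dominated_decay[of _ "\<nu> + 1" "exp (k * ln c)"])
    fix w :: real
    have pos: "0 < 1 + w\<^sup>2 / \<nu>" using nu by (simp add: add_pos_nonneg)
    have s0: "(1 + t)\<^sup>2 \<le> 2 * (1 + t\<^sup>2)" for t :: real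
    proof -
      have e1: "(1 + t)\<^sup>2 = 1 + 2 * t + t\<^sup>2" by (simp add: power2_eq_square algebra_simps)
      have e2: "(t - 1)\<^sup>2 = t\<^sup>2 - 2 * t + 1" by (simp add: power2_eq_square algebra_simps)
      have e3: "0 \<le> (t - 1)\<^sup>2" by simp
      have eq: "2 * (1 + t\<^sup>2) = (1 + t)\<^sup>2 + (t - 1)\<^sup>2" by (simp add: power2_eq_square algebra_simps)
      show ?thesis unfolding eq using e3 by simp
    qed
    have s1: "(1 + \<bar>w\<bar>)\<^sup>2 \<le> 2 * (1 + w\<^sup>2)" using s0[of "\<bar>w\<bar>"] by simp
    have m1: "1 \<le> max 1 \<nu>" by simp
    have "w\<^sup>2 = \<nu> * (w\<^sup>2 / \<nu>)" using nu by simp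
    also have "\<dots> \<le> max 1 \<nu> * (w\<^sup>2 / \<nu>)" using nu by (intro mult_right_mono) auto
    finally have m2: "w\<^sup>2 \<le> max 1 \<nu> * (w\<^sup>2 / \<nu>)" .
    have s2: "2 * (1 + w\<^sup>2) \<le> c * (1 + w\<^sup>2 / \<nu>)"
      using m1 m2 unfolding c_def by (simp add: distrib_left)
    have le: "(1 + \<bar>w\<bar>)\<^sup>2 \<le> c * (1 + w\<^sup>2 / \<nu>)" using s1 s2 by linarith
    have p1: "0 < (1 + \<bar>w\<bar>)\<^sup>2" by (simp add: add_pos_nonneg)
    have "2 * ln (1 + \<bar>w\<bar>) = ln ((1 + \<bar>w\<bar>)\<^sup>2)" by (simp add: ln_realpow add_pos_nonneg)
    also have "\<dots> \<le> ln (c * (1 + w\<^sup>2 / \<nu>))" using le p1 c pos by (subst ln_le_cancel_iff) auto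
    also have "\<dots> = ln c + ln (1 + w\<^sup>2 / \<nu>)" using c pos by (simp add: ln_mult)
    finally have l2: "2 * ln (1 + \<bar>w\<bar>) \<le> ln c + ln (1 + w\<^sup>2 / \<nu>)" .
    have "k * (2 * ln (1 + \<bar>w\<bar>)) \<le> k * (ln c + ln (1 + w\<^sup>2 / \<nu>))"
      using l2 k0 by (rule mult_left_mono)
    moreover have "(\<nu> + 1) * ln (1 + \<bar>w\<bar>) = k * (2 * ln (1 + \<bar>w\<bar>))" by (simp add: k_def)
    ultimately have ineq: "- k * ln (1 + w\<^sup>2 / \<nu>) \<le> k * ln c + (-(\<nu> + 1)) * ln (1 + \<bar>w\<bar>)"
      by (simp add: algebra_simps)
    have nz: "1 + \<bar>w\<bar> \<noteq> 0" by (metis abs_ge_zero add_pos_nonneg less_numeral_extra(1) less_irrefl)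
    have "exp (- k * ln (1 + w\<^sup>2 / \<nu>)) \<le> exp (k * ln c + (-(\<nu> + 1)) * ln (1 + \<bar>w\<bar>))"
      using ineq by simp
    also have "\<dots> = exp (k * ln c) * (1 + \<bar>w\<bar>) powr (-(\<nu> + 1))"
      using nz by (simp add: powr_def exp_add)
    finally show "\<bar>exp (- k * ln (1 + w\<^sup>2 / \<nu>))\<bar> \<le> exp (k * ln c) * (1 + \<bar>w\<bar>) powr (-(\<nu> + 1))" by simp
  next
    have "\<And>x::real. 0 < 1 + x\<^sup>2 / \<nu>" using nu by (simp add: add_pos_nonneg)
    hence "continuous_on UNIV (\<lambda>w. exp (- k * ln (1 + w\<^sup>2 / \<nu>)))"
      using nu by (intro continuous_intros) (auto simp: less_imp_neq[THEN not_sym])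
    thus "(\<lambda>w. exp (- k * ln (1 + w\<^sup>2 / \<nu>))) \<in> borel_measurable lborel" by (rule cont_meas)
  qed (use nu in simp)
  moreover have "dy_kernel (psi4 \<nu>) 0 ((\<nu> + 1) / 2) = (\<lambda>w. exp (- k * ln (1 + w\<^sup>2 / \<nu>)))" by (rule ext) (simp add: dy_kernel_def psi4_def k_def)
  ultimately show ?thesis by simp
qed


lemma minv_eq:
  fixes A B :: "real mat"
  assumes A: "A \<in> carrier_mat n n" and B: "B \<in> carrier_mat n n" and AB: "A * B = 1\<^sub>m n"
  shows "minv A = B"
proof -
  have "det A * det B = 1" using det_mult[OF A B] AB by simp
  hence "det A \<noteq> 0" by auto
  from det_non_zero_imp_unit[OF A this]
  have U: "A \<in> Units (ring_mat TYPE(real) n ())" .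
  have "mat_inverse A \<noteq> None"
  proof
    assume "mat_inverse A = None"
    from mat_inverse(1)[OF A this, of "()"] U show False by blast
  qed
  then obtain C where C: "mat_inverse A = Some C" by auto
  from mat_inverse(2)[OF A C] have C1: "C * A = 1\<^sub>m n" and Cc: "C \<in> carrier_mat n n" by auto
  have "C = C * (A * B)" using Cc AB by simp
  also have "\<dots> = (C * A) * B" using A B Cc by (simp add: assoc_mult_mat)
  also have "\<dots> = B" using C1 B by simp
  finally show ?thesis using C by (simp add: minv_def)
qed

lemma invertible_minv:
  fixes A :: "real mat"
  assumes A: "A \<in> carrier_mat n n" and inv: "invertible_mat A"
  shows "A * minv A = 1\<^sub>m n" "minv A * A = 1\<^sub>m n" "minv A \<in> carrier_mat n n" "det A \<noteq> 0"
proof -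
  obtain B where AB: "A * B = 1\<^sub>m (dim_row A)" and BA: "B * A = 1\<^sub>m (dim_row B)"
    using inv unfolding invertible_mat_def inverts_mat_def by blast
  have "dim_col B = n" using AB A by (metis dim_col_mat(1) index_mult_mat(3) carrier_matD(1) index_one_mat(3))
  moreover have "dim_row B = n" using BA A by (metis index_mult_mat(3) carrier_matD(2) index_one_mat(3))
  ultimately have B: "B \<in> carrier_mat n n" by auto
  have AB': "A * B = 1\<^sub>m n" using AB A by simp
  have BA': "B * A = 1\<^sub>m n" using BA B by simp
  have m: "minv A = B" by (rule minv_eq[OF A B AB'])
  show "A * minv A = 1\<^sub>m n" "minv A * A = 1\<^sub>m n" "minv A \<in> carrier_mat n n" using m AB' BA' B by auto
  have "det A * det B = 1" using det_mult[OF A B] AB' by simp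
  thus "det A \<noteq> 0" by auto
qed

lemma zero_mat_mult_vec[simp]: "v \<in> carrier_vec nc \<Longrightarrow> 0\<^sub>m nr nc *\<^sub>v v = 0\<^sub>v nr"
  by (rule eq_vecI) (auto simp: mult_mat_vec_def scalar_prod_def)

lemma four_block_singleton: "A \<in> carrier_mat n m \<Longrightarrow> four_block_mat A (0\<^sub>m n 0) (0\<^sub>m 0 m) (0\<^sub>m 0 0) = A"
  by (rule eq_matI) auto

lemma smult_one_mult_vec: "v \<in> carrier_vec n \<Longrightarrow> (k \<cdot>\<^sub>m 1\<^sub>m n) *\<^sub>v v = (k :: real) \<cdot>\<^sub>v v"
  by (rule eq_vecI) (auto simp: row_smult row_one smult_scalar_prod_distrib scalar_prod_left_unit)

lemma append_vec_dim0: "b \<in> carrier_vec 0 \<Longrightarrow> a @\<^sub>v b = a"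
  by (intro eq_vecI) auto

lemma hcat_carrier[simp,intro]: "A \<in> carrier_mat nr n1 \<Longrightarrow> B \<in> carrier_mat nr n2 \<Longrightarrow> hcat A B \<in> carrier_mat nr (n1 + n2)"
  unfolding hcat_def by (metis add.right_neutral carrier_matD(2) four_block_carrier_mat zero_carrier_mat)

lemma hcat_mult_vec:
  assumes A: "A \<in> carrier_mat nr n1" and B: "B \<in> carrier_mat nr n2" and x: "x \<in> carrier_vec n1" and y: "y \<in> carrier_vec n2"
  shows "hcat A B *\<^sub>v (x @\<^sub>v y) = A *\<^sub>v x + B *\<^sub>v y"
proof -
  have "hcat A B *\<^sub>v (x @\<^sub>v y) = (A *\<^sub>v x + B *\<^sub>v y) @\<^sub>v (0\<^sub>m 0 n1 *\<^sub>v x + 0\<^sub>m 0 n2 *\<^sub>v y)"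
    unfolding hcat_def using A B x y four_block_mat_mult_vec[OF A B zero_carrier_mat[of 0 n1] zero_carrier_mat[of 0 n2] x y] by simp
  also have "\<dots> = A *\<^sub>v x + B *\<^sub>v y" by (rule append_vec_dim0) (use x y in simp)
  finally show ?thesis .
qed

lemma append_rows_mult_vec:
  assumes A: "A \<in> carrier_mat nr1 nc" and B: "B \<in> carrier_mat nr2 nc" and x: "x \<in> carrier_vec nc"
  shows "(A @\<^sub>r B) *\<^sub>v x = (A *\<^sub>v x) @\<^sub>v (B *\<^sub>v x)"
proof -
  have "(A @\<^sub>r B) *\<^sub>v (x @\<^sub>v 0\<^sub>v 0) = (A *\<^sub>v x + 0\<^sub>m nr1 0 *\<^sub>v 0\<^sub>v 0) @\<^sub>v (B *\<^sub>v x + 0\<^sub>m nr2 0 *\<^sub>v 0\<^sub>v 0)"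
    unfolding append_rows_def using A B x four_block_mat_mult_vec[OF A zero_carrier_mat[of nr1 0] B zero_carrier_mat[of nr2 0] x zero_carrier_vec[of 0]] by simp
  moreover have "x @\<^sub>v 0\<^sub>v 0 = x" by (rule append_vec_dim0) auto
  ultimately show ?thesis using A B x by simp
qed

lemma diag2_mult_vec:
  assumes A: "A \<in> carrier_mat n1 n1" and B: "B \<in> carrier_mat n2 n2" and x: "x \<in> carrier_vec n1" and y: "y \<in> carrier_vec n2"
  shows "four_block_mat A (0\<^sub>m n1 n2) (0\<^sub>m n2 n1) B *\<^sub>v (x @\<^sub>v y) = (A *\<^sub>v x) @\<^sub>v (B *\<^sub>v y)"
proof -
  have "four_block_mat A (0\<^sub>m n1 n2) (0\<^sub>m n2 n1) B *\<^sub>v (x @\<^sub>v y) = (A *\<^sub>v x + 0\<^sub>m n1 n2 *\<^sub>v y) @\<^sub>v (0\<^sub>m n2 n1 *\<^sub>v x + B *\<^sub>v y)"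
    using four_block_mat_mult_vec[OF A zero_carrier_mat zero_carrier_mat B x y] .
  thus ?thesis using A B x y by simp
qed

lemma diag2_mult:
  assumes A: "A \<in> carrier_mat n1 n1" and B: "B \<in> carrier_mat n2 n2"
    and C: "C \<in> carrier_mat n1 n1" and D: "D \<in> carrier_mat n2 n2"
  shows "four_block_mat A (0\<^sub>m n1 n2) (0\<^sub>m n2 n1) B * four_block_mat C (0\<^sub>m n1 n2) (0\<^sub>m n2 n1) D
       = four_block_mat (A * C) (0\<^sub>m n1 n2) (0\<^sub>m n2 n1) (B * D)"
  using A B C D by (subst mult_four_block_mat[OF A zero_carrier_mat zero_carrier_mat B C zero_carrier_mat zero_carrier_mat D]) auto

lemma D_mat_props:
  fixes Db De :: "real mat"
  assumes Db: "Db \<in> carrier_mat p p" "invertible_mat Db" and De: "De \<in> carrier_mat r r" "invertible_mat De"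
    and s: "s > 0"
  shows "D_mat N Db De s \<in> carrier_mat (N + p + r + N) (N + p + r + N)"
    "det (D_mat N Db De s) = det Db * det De * s ^ N"
    "\<And>v1 v2 v3 v4. v1 \<in> carrier_vec N \<Longrightarrow> v2 \<in> carrier_vec p \<Longrightarrow> v3 \<in> carrier_vec r \<Longrightarrow> v4 \<in> carrier_vec N \<Longrightarrow>
      minv (D_mat N Db De s) *\<^sub>v (v1 @\<^sub>v v2 @\<^sub>v v3 @\<^sub>v v4)
      = v1 @\<^sub>v (minv Db *\<^sub>v v2) @\<^sub>v (minv De *\<^sub>v v3) @\<^sub>v ((1 / s) \<cdot>\<^sub>v v4)"
proof -
  note ib = invertible_minv[OF Db] and ie = invertible_minv[OF De]
  define E where "E = diag_block_mat [1\<^sub>m N, minv Db, minv De, (1/s) \<cdot>\<^sub>m 1\<^sub>m N]"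
  have Dm: "D_mat N Db De s = four_block_mat (1\<^sub>m N) (0\<^sub>m N (p + r + N)) (0\<^sub>m (p + r + N) N)
      (four_block_mat Db (0\<^sub>m p (r + N)) (0\<^sub>m (r + N) p) (four_block_mat De (0\<^sub>m r N) (0\<^sub>m N r) (s \<cdot>\<^sub>m 1\<^sub>m N)))"
    unfolding D_mat_def using Db De by (simp add: Let_def four_block_singleton[of _ N N] add.assoc)
  have Em: "E = four_block_mat (1\<^sub>m N) (0\<^sub>m N (p + r + N)) (0\<^sub>m (p + r + N) N)
      (four_block_mat (minv Db) (0\<^sub>m p (r + N)) (0\<^sub>m (r + N) p) (four_block_mat (minv De) (0\<^sub>m r N) (0\<^sub>m N r) ((1/s) \<cdot>\<^sub>m 1\<^sub>m N)))"
    unfolding E_def using ib(3) ie(3) by (simp add: Let_def four_block_singleton[of _ N N] add.assoc)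
  show car: "D_mat N Db De s \<in> carrier_mat (N + p + r + N) (N + p + r + N)"
    unfolding Dm using Db De by (auto simp: add.assoc intro!: four_block_carrier_mat)
  have Ec: "E \<in> carrier_mat (N + p + r + N) (N + p + r + N)"
    unfolding Em using ib(3) ie(3) by (auto simp: add.assoc intro!: four_block_carrier_mat)
  have "(s \<cdot>\<^sub>m 1\<^sub>m N) * ((1/s) \<cdot>\<^sub>m 1\<^sub>m N) = s \<cdot>\<^sub>m (1\<^sub>m N * ((1/s) \<cdot>\<^sub>m 1\<^sub>m N))"
    by (rule mult_smult_assoc_mat) auto
  also have "\<dots> = s \<cdot>\<^sub>m ((1/s) \<cdot>\<^sub>m (1\<^sub>m N * 1\<^sub>m N))"
    by (subst mult_smult_distrib[of "1\<^sub>m N" N N "1\<^sub>m N" N]) auto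
  also have "\<dots> = 1\<^sub>m N" using s by (intro eq_matI) auto
  finally have sm: "(s \<cdot>\<^sub>m 1\<^sub>m N) * ((1/s) \<cdot>\<^sub>m 1\<^sub>m N) = 1\<^sub>m N" .
  have "D_mat N Db De s * E = four_block_mat (1\<^sub>m N * 1\<^sub>m N) (0\<^sub>m N (p + r + N)) (0\<^sub>m (p + r + N) N)
      (four_block_mat (Db * minv Db) (0\<^sub>m p (r + N)) (0\<^sub>m (r + N) p) (four_block_mat (De * minv De) (0\<^sub>m r N) (0\<^sub>m N r) ((s \<cdot>\<^sub>m 1\<^sub>m N) * ((1/s) \<cdot>\<^sub>m 1\<^sub>m N))))"
    unfolding Dm Em using Db De ib(3) ie(3)
    by (simp add: diag2_mult four_block_carrier_mat add.assoc del: four_block_one_mat)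
  also have "\<dots> = 1\<^sub>m (N + p + r + N)"
    unfolding sm using ib(1) ie(1) by (simp add: add.assoc)
  finally have "D_mat N Db De s * E = 1\<^sub>m (N + p + r + N)" .
  hence mE: "minv (D_mat N Db De s) = E" by (rule minv_eq[OF car Ec])
  have M3: "four_block_mat De (0\<^sub>m r N) (0\<^sub>m N r) (s \<cdot>\<^sub>m 1\<^sub>m N) \<in> carrier_mat (r + N) (r + N)"
    using De by auto
  have M2: "four_block_mat Db (0\<^sub>m p (r + N)) (0\<^sub>m (r + N) p) (four_block_mat De (0\<^sub>m r N) (0\<^sub>m N r) (s \<cdot>\<^sub>m 1\<^sub>m N)) \<in> carrier_mat (p + r + N) (p + r + N)"
    using Db M3 by (auto simp: add.assoc)
  have d3: "det (four_block_mat De (0\<^sub>m r N) (0\<^sub>m N r) (s \<cdot>\<^sub>m 1\<^sub>m N)) = det De * s ^ N"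
    by (subst det_four_block_mat_lower_left_zero[OF De(1) zero_carrier_mat refl smult_carrier_mat[OF one_carrier_mat]]) simp
  have d2: "det (four_block_mat Db (0\<^sub>m p (r + N)) (0\<^sub>m (r + N) p) (four_block_mat De (0\<^sub>m r N) (0\<^sub>m N r) (s \<cdot>\<^sub>m 1\<^sub>m N))) = det Db * (det De * s ^ N)"
    by (subst det_four_block_mat_lower_left_zero[OF Db(1) zero_carrier_mat refl M3]) (simp add: d3)
  show "det (D_mat N Db De s) = det Db * det De * s ^ N"
    unfolding Dm by (subst det_four_block_mat_lower_left_zero[OF one_carrier_mat zero_carrier_mat refl M2]) (simp add: d2)
  fix v1 v2 v3 v4 :: "real vec" assume v: "v1 \<in> carrier_vec N" "v2 \<in> carrier_vec p" "v3 \<in> carrier_vec r" "v4 \<in> carrier_vec N"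
  show "minv (D_mat N Db De s) *\<^sub>v (v1 @\<^sub>v v2 @\<^sub>v v3 @\<^sub>v v4)
      = v1 @\<^sub>v (minv Db *\<^sub>v v2) @\<^sub>v (minv De *\<^sub>v v3) @\<^sub>v ((1 / s) \<cdot>\<^sub>v v4)"
  proof -
    have E3: "four_block_mat (minv De) (0\<^sub>m r N) (0\<^sub>m N r) ((1/s) \<cdot>\<^sub>m 1\<^sub>m N) \<in> carrier_mat (r + N) (r + N)"
      using ie(3) by auto
    have E2: "four_block_mat (minv Db) (0\<^sub>m p (r + N)) (0\<^sub>m (r + N) p) (four_block_mat (minv De) (0\<^sub>m r N) (0\<^sub>m N r) ((1/s) \<cdot>\<^sub>m 1\<^sub>m N)) \<in> carrier_mat (p + r + N) (p + r + N)"
      using ib(3) E3 by (auto simp: add.assoc)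
    have w34: "v3 @\<^sub>v v4 \<in> carrier_vec (r + N)" using v by auto
    have w234: "v2 @\<^sub>v v3 @\<^sub>v v4 \<in> carrier_vec (p + r + N)" using v by (metis add.assoc append_carrier_vec)
    show ?thesis unfolding mE Em
      by (simp add: diag2_mult_vec[OF one_carrier_mat E2 v(1) w234] diag2_mult_vec[OF ib(3) E3 v(2) w34]
          diag2_mult_vec[OF ie(3) smult_carrier_mat[OF one_carrier_mat] v(3) v(4)] smult_one_mult_vec[OF v(4)] v(1))
  qed
qed

lemma mult_hcat:
  fixes M A B :: "real mat"
  assumes M: "M \<in> carrier_mat m nr" and A: "A \<in> carrier_mat nr n1" and B: "B \<in> carrier_mat nr n2"
  shows "M * hcat A B = hcat (M * A) (M * B)"
proof -
  have "M = four_block_mat M (0\<^sub>m m 0) (0\<^sub>m 0 nr) (0\<^sub>m 0 0)" using four_block_singleton[OF M] by simp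
  hence "M * hcat A B = four_block_mat M (0\<^sub>m m 0) (0\<^sub>m 0 nr) (0\<^sub>m 0 0) * four_block_mat A B (0\<^sub>m 0 n1) (0\<^sub>m 0 n2)"
    using A B by (simp add: hcat_def)
  also have "\<dots> = four_block_mat (M * A + 0\<^sub>m m 0 * 0\<^sub>m 0 n1) (M * B + 0\<^sub>m m 0 * 0\<^sub>m 0 n2)
      (0\<^sub>m 0 nr * A + 0\<^sub>m 0 0 * 0\<^sub>m 0 n1) (0\<^sub>m 0 nr * B + 0\<^sub>m 0 0 * 0\<^sub>m 0 n2)"
    by (rule mult_four_block_mat[OF M zero_carrier_mat zero_carrier_mat zero_carrier_mat A B zero_carrier_mat zero_carrier_mat])
  also have "\<dots> = hcat (M * A) (M * B)" using M A B by (simp add: hcat_def)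
  finally show ?thesis .
qed

lemma append_rows_mult:
  fixes M A B :: "real mat"
  assumes A: "A \<in> carrier_mat r1 nc" and B: "B \<in> carrier_mat r2 nc" and M: "M \<in> carrier_mat nc k"
  shows "(A @\<^sub>r B) * M = (A * M) @\<^sub>r (B * M)"
proof -
  have "M = four_block_mat M (0\<^sub>m nc 0) (0\<^sub>m 0 k) (0\<^sub>m 0 0)" using four_block_singleton[OF M] by simp
  hence "(A @\<^sub>r B) * M = four_block_mat A (0\<^sub>m r1 0) B (0\<^sub>m r2 0) * four_block_mat M (0\<^sub>m nc 0) (0\<^sub>m 0 k) (0\<^sub>m 0 0)"
    using A B by (simp add: append_rows_def)
  also have "\<dots> = four_block_mat (A * M + 0\<^sub>m r1 0 * 0\<^sub>m 0 k) (A * 0\<^sub>m nc 0 + 0\<^sub>m r1 0 * 0\<^sub>m 0 0)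
      (B * M + 0\<^sub>m r2 0 * 0\<^sub>m 0 k) (B * 0\<^sub>m nc 0 + 0\<^sub>m r2 0 * 0\<^sub>m 0 0)"
    by (rule mult_four_block_mat[OF A zero_carrier_mat B zero_carrier_mat M zero_carrier_mat zero_carrier_mat zero_carrier_mat])
  also have "\<dots> = (A * M) @\<^sub>r (B * M)" using M A B by (simp add: append_rows_def)
  finally show ?thesis .
qed

lemma hcat_append_rows:
  fixes A B C D :: "real mat"
  assumes A: "A \<in> carrier_mat r1 c1" and B: "B \<in> carrier_mat r1 c2" and C: "C \<in> carrier_mat r2 c1" and D: "D \<in> carrier_mat r2 c2"
  shows "hcat (A @\<^sub>r C) (B @\<^sub>r D) = four_block_mat A B C D"
  using A B C D by (intro eq_matI) (auto simp: hcat_def append_rows_def)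

lemma append_vec_eq_zero:
  fixes a b :: "real vec"
  assumes a: "a \<in> carrier_vec n1" and b: "b \<in> carrier_vec n2" and z: "a @\<^sub>v b = 0\<^sub>v (n1 + n2)"
  shows "a = 0\<^sub>v n1" "b = 0\<^sub>v n2"
proof -
  show "a = 0\<^sub>v n1"
  proof (rule eq_vecI)
    fix i assume "i < dim_vec (0\<^sub>v n1 :: real vec)"
    hence i: "i < n1" by simp
    have "(a @\<^sub>v b) $ i = 0" using z i by simp
    thus "a $ i = 0\<^sub>v n1 $ i" using a b i by simp
  qed (use a in simp)
  show "b = 0\<^sub>v n2"
  proof (rule eq_vecI)
    fix i assume "i < dim_vec (0\<^sub>v n2 :: real vec)"
    hence i: "i < n2" by simp
    have "(a @\<^sub>v b) $ (n1 + i) = 0" using z i by simp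
    thus "b $ i = 0\<^sub>v n2 $ i" using a b i by simp
  qed (use b in simp)
qed

lemma self_scalar_prod_zero:
  fixes w :: "real vec"
  assumes "w \<bullet> w = 0" shows "w = 0\<^sub>v (dim_vec w)"
proof (rule eq_vecI)
  have "(\<Sum>i\<in>{0..<dim_vec w}. w $ i * w $ i) = 0" using assms by (simp add: scalar_prod_def)
  hence "\<forall>i\<in>{0..<dim_vec w}. w $ i * w $ i = 0" by (subst (asm) sum_nonneg_eq_0_iff) auto
  thus "\<And>i. i < dim_vec (0\<^sub>v (dim_vec w)) \<Longrightarrow> w $ i = 0\<^sub>v (dim_vec w) $ i" by auto
qed simp


lemma H_props:
  fixes X G Q :: "real mat"
  assumes X: "X \<in> carrier_mat N p" and G: "G \<in> carrier_mat N r"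
    and Q: "Q \<in> carrier_mat (2 * N + p + r) N" "transpose_mat Q * Q = 1\<^sub>m N"
      "transpose_mat (H_mat N p r X G) * Q = 0\<^sub>m (N + p + r) N"
  defines "H \<equiv> H_mat N p r X G"
  defines "W \<equiv> hcat H Q"
  defines "B \<equiv> (minv (transpose_mat H * H) * transpose_mat H) @\<^sub>r transpose_mat Q"
  shows "H \<in> carrier_mat (2 * N + p + r) (N + p + r)"
    "\<And>xi beta eta. xi \<in> carrier_vec N \<Longrightarrow> beta \<in> carrier_vec p \<Longrightarrow> eta \<in> carrier_vec r \<Longrightarrow>
      H *\<^sub>v (xi @\<^sub>v beta @\<^sub>v eta) = (xi + (X *\<^sub>v beta + G *\<^sub>v eta)) @\<^sub>v beta @\<^sub>v eta @\<^sub>v xi"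
    "W \<in> carrier_mat (2 * N + p + r) (2 * N + p + r)"
    "B \<in> carrier_mat (2 * N + p + r) (2 * N + p + r)"
    "W * B = 1\<^sub>m (2 * N + p + r)" "minv W = B" "minv B = W" "det B \<noteq> 0"
proof -
  have Hc: "H \<in> carrier_mat (N + (p + (r + N))) (N + (p + r))"
    unfolding H_def H_mat_def using X G by (intro carrier_append_rows hcat_carrier) auto
  have e1: "N + (p + (r + N)) = 2 * N + p + r" by simp
  have e2: "N + (p + r) = N + p + r" by simp
  show Hc': "H \<in> carrier_mat (2 * N + p + r) (N + p + r)" using Hc unfolding e1 e2 .
  show Hv: "H *\<^sub>v (xi @\<^sub>v beta @\<^sub>v eta) = (xi + (X *\<^sub>v beta + G *\<^sub>v eta)) @\<^sub>v beta @\<^sub>v eta @\<^sub>v xi"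
    if v: "xi \<in> carrier_vec N" "beta \<in> carrier_vec p" "eta \<in> carrier_vec r" for xi beta eta
  proof -
    have be: "beta @\<^sub>v eta \<in> carrier_vec (p + r)" using v by auto
    have all: "xi @\<^sub>v beta @\<^sub>v eta \<in> carrier_vec (N + (p + r))" using v by auto
    have R1: "hcat (1\<^sub>m N) (hcat X G) *\<^sub>v (xi @\<^sub>v beta @\<^sub>v eta) = xi + (X *\<^sub>v beta + G *\<^sub>v eta)"
      using v X G be by (simp add: hcat_mult_vec[OF one_carrier_mat hcat_carrier[OF X G] v(1) be] hcat_mult_vec[OF X G v(2,3)])
    have R2: "hcat (0\<^sub>m p N) (hcat (1\<^sub>m p) (0\<^sub>m p r)) *\<^sub>v (xi @\<^sub>v beta @\<^sub>v eta) = beta"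
      using v be by (simp add: hcat_mult_vec[OF zero_carrier_mat hcat_carrier[OF one_carrier_mat zero_carrier_mat] v(1) be] hcat_mult_vec[OF one_carrier_mat zero_carrier_mat v(2,3)])
    have R3: "hcat (0\<^sub>m r N) (hcat (0\<^sub>m r p) (1\<^sub>m r)) *\<^sub>v (xi @\<^sub>v beta @\<^sub>v eta) = eta"
      using v be by (simp add: hcat_mult_vec[OF zero_carrier_mat hcat_carrier[OF zero_carrier_mat one_carrier_mat] v(1) be] hcat_mult_vec[OF zero_carrier_mat one_carrier_mat v(2,3)])
    have R4: "hcat (1\<^sub>m N) (hcat (0\<^sub>m N p) (0\<^sub>m N r)) *\<^sub>v (xi @\<^sub>v beta @\<^sub>v eta) = xi"
      using v be by (simp add: hcat_mult_vec[OF one_carrier_mat hcat_carrier[OF zero_carrier_mat zero_carrier_mat] v(1) be] hcat_mult_vec[OF zero_carrier_mat zero_carrier_mat v(2,3)])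
    have c1: "hcat (1\<^sub>m N) (hcat X G) \<in> carrier_mat N (N + (p + r))" using X G by auto
    have c2: "hcat (0\<^sub>m p N) (hcat (1\<^sub>m p) (0\<^sub>m p r)) \<in> carrier_mat p (N + (p + r))" by auto
    have c3: "hcat (0\<^sub>m r N) (hcat (0\<^sub>m r p) (1\<^sub>m r)) \<in> carrier_mat r (N + (p + r))" by auto
    have c4: "hcat (1\<^sub>m N) (hcat (0\<^sub>m N p) (0\<^sub>m N r)) \<in> carrier_mat N (N + (p + r))" by auto
    have c34: "hcat (0\<^sub>m r N) (hcat (0\<^sub>m r p) (1\<^sub>m r)) @\<^sub>r hcat (1\<^sub>m N) (hcat (0\<^sub>m N p) (0\<^sub>m N r)) \<in> carrier_mat (r + N) (N + (p + r))"
      using c3 c4 by auto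
    have c234: "hcat (0\<^sub>m p N) (hcat (1\<^sub>m p) (0\<^sub>m p r)) @\<^sub>r hcat (0\<^sub>m r N) (hcat (0\<^sub>m r p) (1\<^sub>m r)) @\<^sub>r hcat (1\<^sub>m N) (hcat (0\<^sub>m N p) (0\<^sub>m N r)) \<in> carrier_mat (p + (r + N)) (N + (p + r))"
      using c2 c34 by auto
    show ?thesis unfolding H_def H_mat_def
      using R1 R2 R3 R4
      by (simp only: append_rows_mult_vec[OF c1 c234 all] append_rows_mult_vec[OF c2 c34 all] append_rows_mult_vec[OF c3 c4 all])
  qed
  show Wc: "W \<in> carrier_mat (2 * N + p + r) (2 * N + p + r)"
  proof -
    have e3: "N + p + r + N = 2 * N + p + r" by simp
    show ?thesis unfolding W_def using hcat_carrier[OF Hc' Q(1)] unfolding e3 .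
  qed
  define K where "K = transpose_mat H * H"
  have Kc: "K \<in> carrier_mat (N + p + r) (N + p + r)" unfolding K_def using Hc' by auto
  have detK: "det K \<noteq> 0"
  proof
    assume "det K = 0"
    then obtain v where v: "v \<in> carrier_vec (N + p + r)" "v \<noteq> 0\<^sub>v (N + p + r)" "K *\<^sub>v v = 0\<^sub>v (N + p + r)"
      using det_0_iff_vec_prod_zero_field[OF Kc] by blast
    have "(transpose_mat H *\<^sub>v (H *\<^sub>v v)) \<bullet> v = (H *\<^sub>v v) \<bullet> (H *\<^sub>v v)"
      using Hc' v(1) by (intro transpose_vec_mult_scalar) auto
    moreover have "transpose_mat H *\<^sub>v (H *\<^sub>v v) = K *\<^sub>v v" unfolding K_def using Hc' v(1) by simp
    ultimately have "(H *\<^sub>v v) \<bullet> (H *\<^sub>v v) = 0" using v by simp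
    hence Hv00: "H *\<^sub>v v = 0\<^sub>v (dim_vec (H *\<^sub>v v))" by (rule self_scalar_prod_zero)
    have dH: "dim_vec (H *\<^sub>v v) = N + (p + (r + N))" using Hc by simp
    have Hv0: "H *\<^sub>v v = 0\<^sub>v (N + (p + (r + N)))" using Hv00 unfolding dH .
    define xi where "xi = vec_first v N"
    define rest where "rest = vec_last v (p + r)"
    define beta where "beta = vec_first rest p"
    define eta where "eta = vec_last rest r"
    have v1: "v \<in> carrier_vec (N + (p + r))" using v(1) by (simp add: add.assoc)
    have vd: "v = xi @\<^sub>v beta @\<^sub>v eta"
      unfolding xi_def beta_def eta_def rest_def using v1 by simp
    have cs: "xi \<in> carrier_vec N" "beta \<in> carrier_vec p" "eta \<in> carrier_vec r"
      unfolding xi_def beta_def eta_def by auto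
    have H0': "H *\<^sub>v (xi @\<^sub>v beta @\<^sub>v eta) = 0\<^sub>v (N + (p + (r + N)))" using Hv0 unfolding vd .
    have eq0: "(xi + (X *\<^sub>v beta + G *\<^sub>v eta)) @\<^sub>v beta @\<^sub>v eta @\<^sub>v xi = 0\<^sub>v (N + (p + (r + N)))"
      using H0' unfolding Hv[OF cs] .
    have c1: "xi + (X *\<^sub>v beta + G *\<^sub>v eta) \<in> carrier_vec N" using cs X G by auto
    have c2: "eta @\<^sub>v xi \<in> carrier_vec (r + N)" using cs by auto
    have c3: "beta @\<^sub>v eta @\<^sub>v xi \<in> carrier_vec (p + (r + N))" using cs by auto
    have z1: "beta @\<^sub>v eta @\<^sub>v xi = 0\<^sub>v (p + (r + N))" by (rule append_vec_eq_zero(2)[OF c1 c3 eq0])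
    have zb: "beta = 0\<^sub>v p" by (rule append_vec_eq_zero(1)[OF cs(2) c2 z1])
    have z2: "eta @\<^sub>v xi = 0\<^sub>v (r + N)" by (rule append_vec_eq_zero(2)[OF cs(2) c2 z1])
    have ze: "eta = 0\<^sub>v r" by (rule append_vec_eq_zero(1)[OF cs(3) cs(1) z2])
    have zx: "xi = 0\<^sub>v N" by (rule append_vec_eq_zero(2)[OF cs(3) cs(1) z2])
    have "v = 0\<^sub>v N @\<^sub>v 0\<^sub>v p @\<^sub>v 0\<^sub>v r" unfolding vd zb ze zx ..
    also have "\<dots> = 0\<^sub>v (N + p + r)" by (intro eq_vecI) auto
    finally show False using v(2) by simp
  qed
  have Ki: "K * minv K = 1\<^sub>m (N + p + r)" "minv K * K = 1\<^sub>m (N + p + r)" "minv K \<in> carrier_mat (N + p + r) (N + p + r)"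
  proof -
    from det_non_zero_imp_unit[OF Kc detK] have U: "K \<in> Units (ring_mat TYPE(real) (N + p + r) ())" .
    have "mat_inverse K \<noteq> None"
    proof
      assume "mat_inverse K = None"
      from mat_inverse(1)[OF Kc this, of "()"] U show False by blast
    qed
    then obtain C where C: "mat_inverse K = Some C" by auto
    from mat_inverse(2)[OF Kc C] C
    show "K * minv K = 1\<^sub>m (N + p + r)" "minv K * K = 1\<^sub>m (N + p + r)" "minv K \<in> carrier_mat (N + p + r) (N + p + r)"
      by (auto simp: minv_def)
  qed
  define P where "P = minv K * transpose_mat H"
  have Pc: "P \<in> carrier_mat (N + p + r) (2 * N + p + r)" unfolding P_def using Ki(3) Hc' by auto
  have Qt: "transpose_mat Q \<in> carrier_mat N (2 * N + p + r)" using Q(1) by auto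
  have Bd: "B = P @\<^sub>r transpose_mat Q" unfolding B_def P_def K_def ..
  show Bc: "B \<in> carrier_mat (2 * N + p + r) (2 * N + p + r)" 
  proof -
    have e3: "N + p + r + N = 2 * N + p + r" by simp
    show ?thesis unfolding Bd using carrier_append_rows[OF Pc Qt] unfolding e3 .
  qed
  have PH: "P * H = 1\<^sub>m (N + p + r)" unfolding P_def using Ki Hc' by (simp add: assoc_mult_mat[OF Ki(3) _ Hc'] K_def[symmetric])
  have PQ: "P * Q = 0\<^sub>m (N + p + r) N" unfolding P_def using Ki(3) Hc' Q by (simp add: assoc_mult_mat[OF Ki(3) _ Q(1)] H_def)
  have QH: "transpose_mat Q * H = 0\<^sub>m N (N + p + r)"
  proof -
    have "transpose_mat Q * H = transpose_mat (transpose_mat H * Q)"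
      using Hc' Q(1) by (simp add: transpose_mult[of _ _ "2 * N + p + r"])
    thus ?thesis using Q(3) by (simp add: H_def)
  qed
  have BW: "B * W = 1\<^sub>m (2 * N + p + r)"
  proof -
    have "B * W = hcat (B * H) (B * Q)" unfolding W_def by (rule mult_hcat[OF Bc Hc' Q(1)])
    also have "B * H = (P * H) @\<^sub>r (transpose_mat Q * H)" unfolding Bd by (rule append_rows_mult[OF Pc Qt Hc'])
    also have "B * Q = (P * Q) @\<^sub>r (transpose_mat Q * Q)" unfolding Bd by (rule append_rows_mult[OF Pc Qt Q(1)])
    finally have "B * W = hcat (1\<^sub>m (N + p + r) @\<^sub>r 0\<^sub>m N (N + p + r)) (0\<^sub>m (N + p + r) N @\<^sub>r 1\<^sub>m N)"
      using PH PQ QH Q(2) by simp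
    also have "\<dots> = four_block_mat (1\<^sub>m (N + p + r)) (0\<^sub>m (N + p + r) N) (0\<^sub>m N (N + p + r)) (1\<^sub>m N)"
      by (rule hcat_append_rows) auto
    also have "\<dots> = 1\<^sub>m (N + p + r + N)" by simp
    also have "N + p + r + N = 2 * N + p + r" by simp
    finally show ?thesis .
  qed
  show WB: "W * B = 1\<^sub>m (2 * N + p + r)" by (rule mat_mult_left_right_inverse[OF Bc Wc BW])
  show "minv W = B" by (rule minv_eq[OF Wc Bc WB])
  show "minv B = W" by (rule minv_eq[OF Bc Wc BW])
  have "det B * det W = 1" using det_mult[OF Bc Wc] BW by simp
  thus "det B \<noteq> 0" by auto
qed


lemma append_vec_assoc: "(a @\<^sub>v b) @\<^sub>v c = a @\<^sub>v (b @\<^sub>v c)"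
  by (rule eq_vecI) (auto simp: add.assoc)

lemma append_vec_minus:
  assumes "a \<in> carrier_vec n1" "a' \<in> carrier_vec n1" "b \<in> carrier_vec n2" "b' \<in> carrier_vec n2"
  shows "(a @\<^sub>v b) - (a' @\<^sub>v b') = (a - a') @\<^sub>v (b - b')"
  using assms by (intro eq_vecI) auto

lemma psi_vec_simps[simp]:
  "dim_vec (psi_vec f w) = dim_vec w"
  "i < dim_vec w \<Longrightarrow> psi_vec f w $ i = f i (w $ i)"
  by (auto simp: psi_vec_def)

lemma exp_sum_form:
  assumes "dim_vec a = dim_vec w" "dim_vec k = dim_vec w"
  shows "a \<bullet> w - k \<bullet> psi_vec f w = (\<Sum>i<dim_vec w. a $ i * w $ i - k $ i * f i (w $ i))"
  using assms by (simp add: scalar_prod_def atLeast0LessThan sum_subtractf)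

lemma prod_split_add: "(\<Prod>i<a + b. g i) = (\<Prod>i<a. g i) * (\<Prod>i<b. g (a + i))"
  for g :: "nat \<Rightarrow> real"
  by (induct b) (simp_all add: add.assoc mult.assoc)

lemma sum_split_add: "(\<Sum>i<a + b. g i) = (\<Sum>i<a. g i) + (\<Sum>i<b. g (a + i))"
  for g :: "nat \<Rightarrow> real"
  by (induct b) (simp_all add: add.assoc)

lemma prod_exp_factor:
  fixes F K e :: "nat \<Rightarrow> real"
  assumes "\<And>i. i < n \<Longrightarrow> F i = K i * exp (e i)"
  shows "(\<Prod>i<n. F i) = (\<Prod>i<n. K i) * exp (\<Sum>i<n. e i)"
proof -
  have "(\<Prod>i<n. F i) = (\<Prod>i<n. K i * exp (e i))" using assms by (intro prod.cong) auto
  also have "\<dots> = (\<Prod>i<n. K i) * (\<Prod>i<n. exp (e i))" by (rule prod.distrib)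
  also have "(\<Prod>i<n. exp (e i)) = exp (\<Sum>i<n. e i)" by (simp add: exp_sum)
  finally show ?thesis .
qed

lemma normal_factor:
  assumes s: "(s::real) > 0"
  shows "normal_pdf Y s z = (exp (- (z\<^sup>2) / (2 * s)) / sqrt (2 * pi * s)) * exp (z / s * Y - 1 / (2 * s) * psi1 Y)"
proof -
  have "- (z - Y)\<^sup>2 / (2 * s) = - (z\<^sup>2) / (2 * s) + (z / s * Y - 1 / (2 * s) * Y\<^sup>2)"
    using s by (simp add: field_simps power2_eq_square)
  hence "exp (- (z - Y)\<^sup>2 / (2 * s)) = exp (- (z\<^sup>2) / (2 * s)) * exp (z / s * Y - 1 / (2 * s) * psi1 Y)"
    by (simp only: exp_add psi1_def)
  thus ?thesis unfolding normal_pdf_def by simp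
qed

lemma poisson_factor:
  "poisson_pmf (exp Y) k = (1 / fact k) * exp (real k * Y - 1 * psi2 Y)"
proof -
  have "exp Y ^ k = exp (real k * Y)" by (simp add: exp_of_nat_mult)
  thus ?thesis unfolding poisson_pmf_def psi2_def by (simp add: exp_diff exp_minus field_simps)
qed

lemma binom_factor:
  assumes k: "k \<le> m"
  shows "binomial_pmf_real m (exp Y / (1 + exp Y)) k = real (m choose k) * exp (real k * Y - real m * psi3 Y)"
proof -
  define e where "e = exp Y"
  define d where "d = 1 + e"
  have e: "e > 0" by (simp add: e_def)
  have d: "d > 0" using e by (simp add: d_def)
  have 1: "1 - e / d = 1 / d" using d by (simp add: d_def field_simps)
  have "(e / d) ^ k * (1 / d) ^ (m - k) = e ^ k / (d ^ k * d ^ (m - k))"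
    by (simp add: power_divide)
  also have "d ^ k * d ^ (m - k) = d ^ m" using k by (simp add: power_add[symmetric])
  finally have 2: "(e / d) ^ k * (1 / d) ^ (m - k) = e ^ k / d ^ m" .
  have "exp (real m * ln d) = exp (ln d) ^ m" by (rule exp_of_nat_mult)
  hence 31: "exp (real m * ln d) = d ^ m" using d by simp
  have 32: "exp (real k * Y) = e ^ k" unfolding e_def by (rule exp_of_nat_mult)
  have 3: "exp (real k * Y - real m * psi3 Y) = e ^ k / d ^ m"
    unfolding psi3_def e_def[symmetric] d_def[symmetric] exp_diff 31 32 ..
  show ?thesis unfolding binomial_pmf_real_def e_def[symmetric] d_def[symmetric] 1
    using 2 3 by (simp add: mult.assoc)
qed

lemma t_factor:
  assumes nu: "\<nu> > 0"
  shows "t_pdf \<nu> Y z = (1 / (\<integral>u. t_kernel \<nu> u \<partial>lborel)) * exp (0 * (Y - z) - (\<nu> + 1) / 2 * psi4 \<nu> (Y - z))"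
proof -
  have "t_kernel \<nu> (z - Y) = dy_kernel (psi4 \<nu>) 0 ((\<nu> + 1) / 2) (z - Y)" using t_kernel_eq[OF nu] by simp
  also have "\<dots> = exp (0 * (Y - z) - (\<nu> + 1) / 2 * psi4 \<nu> (Y - z))"
    by (simp add: dy_kernel_def psi4_def power2_commute)
  finally show ?thesis unfolding t_pdf_def by simp
qed

lemma final_alg:
  fixes pr K L X SB SE P d a b s :: real
  assumes "P > 0" "d \<noteq> 0" "s > 0" "a \<noteq> 0" "b \<noteq> 0"
  shows "pr * (K * exp L) * exp X * (exp SB / \<bar>a\<bar>) * (exp SE / \<bar>b\<bar>) * 1
    = K * s ^ N * \<bar>d\<bar> / P * (pr * P / (\<bar>a * b * s ^ N\<bar> * \<bar>d\<bar>) * exp (L + X + SB + SE))"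
  using assms by (simp add: exp_add abs_mult field_simps)


theorem theorem3:
  fixes n1 n2 n3 n4 N p r :: nat
    and z1 z4 sigma2 :: "real vec" and z2 z3 m :: "nat vec"
    and \<nu> s2xi alpha_xi :: real
    and X G Q :: "real mat"
    and alpha_b kappa_b alpha_e kappa_e :: "real vec"
    and psib psie :: "nat \<Rightarrow> real \<Rightarrow> real"
    and M :: "'t measure" and prior :: "'t \<Rightarrow> real"
    and Db De :: "'t \<Rightarrow> real mat"
  defines "N \<equiv> n1 + n2 + n3 + n4"
  assumes z1: "z1 \<in> carrier_vec n1" and z2: "z2 \<in> carrier_vec n2"
    and z3: "z3 \<in> carrier_vec n3" and z4: "z4 \<in> carrier_vec n4"
    and sigma2: "sigma2 \<in> carrier_vec n1" "\<forall>i<n1. sigma2 $ i > 0"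
    and m: "m \<in> carrier_vec n3" "\<forall>i<n3. z3 $ i \<le> m $ i"
    and nu: "\<nu> > 0"
    and XG: "X \<in> carrier_mat N p" "G \<in> carrier_mat N r"
    and s2xi: "s2xi > 0" and alpha_xi: "alpha_xi > 0"
    and ab: "alpha_b \<in> carrier_vec p" "kappa_b \<in> carrier_vec p"
    and ae: "alpha_e \<in> carrier_vec r" "kappa_e \<in> carrier_vec r"
    and psib: "\<forall>j<p. psib j \<in> {psi1, psi2, psi3, psi4 \<nu>}
                      \<and> dy_valid (psib j) (alpha_b $ j) (kappa_b $ j)"
    and psie: "\<forall>j<r. psie j \<in> {psi1, psi2, psi3, psi4 \<nu>}
                      \<and> dy_valid (psie j) (alpha_e $ j) (kappa_e $ j)"
    and Q: "Q \<in> carrier_mat (2 * N + p + r) N"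
      "transpose_mat Q * Q = 1\<^sub>m N"
      "transpose_mat (H_mat N p r X G) * Q = 0\<^sub>m (N + p + r) N"
    and prior: "prior \<in> borel_measurable M" "\<forall>\<theta>\<in>space M. prior \<theta> \<ge> 0"
      "integrable M prior" "(\<integral>\<theta>. prior \<theta> \<partial>M) = 1"
    and Db: "\<forall>\<theta>\<in>space M. Db \<theta> \<in> carrier_mat p p \<and> invertible_mat (Db \<theta>)"
    and De: "\<forall>\<theta>\<in>space M. De \<theta> \<in> carrier_mat r r \<and> invertible_mat (De \<theta>)"
  shows
    "let H = H_mat N p r X G;
         A = A_mat N p r X G s2xi;
         D = (\<lambda>\<theta>. D_mat N (Db \<theta>) (De \<theta>) s2xi);
         \<comment> \<open>unnormalized posterior f(zeta, q | z), with f(q) = 1\<close>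
         post = (\<lambda>xi beta eta q.
           let Qq = Q *\<^sub>v q;
               mu_D = - vec N (\<lambda>i. Qq $ i);
               mu_xi = - ((1 / s2xi) \<cdot>\<^sub>v vec N (\<lambda>i. Qq $ (N + p + r + i)));
               mu_b = - vec p (\<lambda>i. Qq $ (N + i));
               mu_e = - vec r (\<lambda>i. Qq $ (N + p + i));
               zeta = xi @\<^sub>v beta @\<^sub>v eta;
               y = X *\<^sub>v beta + G *\<^sub>v eta + xi - mu_D;
               a_xi = 0\<^sub>v n1 @\<^sub>v vec n2 (\<lambda>_. alpha_xi) @\<^sub>v vec n3 (\<lambda>_. alpha_xi)
                      @\<^sub>v 0\<^sub>v (n4 + N);
               k_xi = 0\<^sub>v (n1 + n2) @\<^sub>v vec n3 (\<lambda>_. 2 * alpha_xi) @\<^sub>v 0\<^sub>v n4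
                      @\<^sub>v vec N (\<lambda>_. 1 / 2);
               u = A *\<^sub>v zeta - (mu_D @\<^sub>v mu_xi);
               xi_factor = exp (scalar_prod a_xi u
                                - scalar_prod k_xi (psi_vec (psi_xi n1 n2 n3 N \<nu>) u))
           in \<integral>\<theta>. prior \<theta> * likelihood n1 n2 n3 n4 z1 z2 z3 z4 sigma2 m \<nu> y * xi_factor
                   * dy_prior_factor (Db \<theta>) mu_b alpha_b kappa_b psib beta
                   * dy_prior_factor (De \<theta>) mu_e alpha_e kappa_e psie eta * 1 \<partial>M);
         alpha_M = vec n1 (\<lambda>i. z1 $ i / sigma2 $ i)
                   @\<^sub>v vec n2 (\<lambda>i. real (z2 $ i) + alpha_xi)
                   @\<^sub>v vec n3 (\<lambda>i. real (z3 $ i) + alpha_xi)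
                   @\<^sub>v 0\<^sub>v n4 @\<^sub>v alpha_b @\<^sub>v alpha_e @\<^sub>v 0\<^sub>v N;
         kappa_M = vec n1 (\<lambda>i. 1 / (2 * sigma2 $ i))
                   @\<^sub>v vec n2 (\<lambda>_. 1)
                   @\<^sub>v vec n3 (\<lambda>i. real (m $ i) + 2 * alpha_xi)
                   @\<^sub>v vec n4 (\<lambda>_. (\<nu> + 1) / 2)
                   @\<^sub>v kappa_b @\<^sub>v kappa_e @\<^sub>v vec N (\<lambda>_. 1 / 2);
         c = 0\<^sub>v (n1 + n2 + n3) @\<^sub>v z4 @\<^sub>v 0\<^sub>v (N + p + r);
         V_M = minv (hcat H Q);
         mu_M = ((minv (transpose_mat H * H) * transpose_mat H) @\<^sub>r transpose_mat Q) *\<^sub>v c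
     in \<exists>C > 0. \<forall>xi \<in> carrier_vec N. \<forall>beta \<in> carrier_vec p. \<forall>eta \<in> carrier_vec r.
          \<forall>q \<in> carrier_vec N.
            post xi beta eta q
            = C * gcm_density M prior alpha_M kappa_M mu_M V_M D
                    (psi_M n1 n2 n3 N p r \<nu> psib psie) (xi @\<^sub>v beta @\<^sub>v eta @\<^sub>v q)"
proof -
  have Neq: "N = n1 + n2 + n3 + n4" by (simp add: N_def)
  note HP = H_props[OF XG(1) XG(2) Q(1) Q(2) Q(3)]
  define alpha_M where "alpha_M = vec n1 (\<lambda>i. z1 $ i / sigma2 $ i)
                   @\<^sub>v vec n2 (\<lambda>i. real (z2 $ i) + alpha_xi)
                   @\<^sub>v vec n3 (\<lambda>i. real (z3 $ i) + alpha_xi)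
                   @\<^sub>v 0\<^sub>v n4 @\<^sub>v alpha_b @\<^sub>v alpha_e @\<^sub>v 0\<^sub>v N"
  define kappa_M where "kappa_M = vec n1 (\<lambda>i. 1 / (2 * sigma2 $ i))
                   @\<^sub>v vec n2 (\<lambda>_. 1)
                   @\<^sub>v vec n3 (\<lambda>i. real (m $ i) + 2 * alpha_xi)
                   @\<^sub>v vec n4 (\<lambda>_. (\<nu> + 1) / 2)
                   @\<^sub>v kappa_b @\<^sub>v kappa_e @\<^sub>v vec N (\<lambda>_. 1 / 2)"
  define c where "c = 0\<^sub>v (n1 + n2 + n3) @\<^sub>v z4 @\<^sub>v 0\<^sub>v (N + p + r)"
  define psiM where "psiM = psi_M n1 n2 n3 N p r \<nu> psib psie"
  define Bm where "Bm = (minv (transpose_mat (H_mat N p r X G) * H_mat N p r X G) * transpose_mat (H_mat N p r X G)) @\<^sub>r transpose_mat Q"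
  define W where "W = hcat (H_mat N p r X G) Q"
  define Dt where "Dt = (\<lambda>\<theta>. D_mat N (Db \<theta>) (De \<theta>) s2xi)"
  define P where "P = (\<Prod>l<dim_vec alpha_M. dy_norm (psiM l) (alpha_M $ l) (kappa_M $ l))"
  define K1 where "K1 = (\<Prod>i<n1. exp (- ((z1 $ i)\<^sup>2) / (2 * sigma2 $ i)) / sqrt (2 * pi * sigma2 $ i))"
  define K2 where "K2 = (\<Prod>i<n2. 1 / fact (z2 $ i) :: real)"
  define K3 where "K3 = (\<Prod>i<n3. real (m $ i choose z3 $ i))"
  define K4 where "K4 = (\<Prod>i<n4. 1 / (\<integral>u. t_kernel \<nu> u \<partial>lborel))"
  define Kc where "Kc = K1 * K2 * K3 * K4 * s2xi ^ N * \<bar>det Bm\<bar> / P"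
  have mW: "minv W = Bm" using HP(6) unfolding W_def Bm_def .
  have mB: "minv Bm = W" using HP(7) unfolding W_def Bm_def .
  have dB: "det Bm \<noteq> 0" using HP(8) unfolding Bm_def .
  have WB: "W * Bm = 1\<^sub>m (2 * N + p + r)" using HP(5) unfolding W_def Bm_def .
  have Wc: "W \<in> carrier_mat (2 * N + p + r) (2 * N + p + r)" using HP(3) unfolding W_def .
  have Bc: "Bm \<in> carrier_mat (2 * N + p + r) (2 * N + p + r)" using HP(4) unfolding Bm_def .
  have Hc: "H_mat N p r X G \<in> carrier_mat (2 * N + p + r) (N + p + r)" by (rule HP(1))
  have dimA: "dim_vec alpha_M = n1 + n2 + n3 + n4 + p + r + N"
    using ab ae by (simp add: alpha_M_def)
  have Ppos: "P > 0"
  proof -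
    have "P = (\<Prod>i<n1. dy_norm (psiM i) (alpha_M $ i) (kappa_M $ i))
      * (\<Prod>i<n2. dy_norm (psiM (n1 + i)) (alpha_M $ (n1 + i)) (kappa_M $ (n1 + i)))
      * (\<Prod>i<n3. dy_norm (psiM (n1 + n2 + i)) (alpha_M $ (n1 + n2 + i)) (kappa_M $ (n1 + n2 + i)))
      * (\<Prod>i<n4. dy_norm (psiM (n1 + n2 + n3 + i)) (alpha_M $ (n1 + n2 + n3 + i)) (kappa_M $ (n1 + n2 + n3 + i)))
      * (\<Prod>i<p. dy_norm (psiM (n1 + n2 + n3 + n4 + i)) (alpha_M $ (n1 + n2 + n3 + n4 + i)) (kappa_M $ (n1 + n2 + n3 + n4 + i)))
      * (\<Prod>i<r. dy_norm (psiM (n1 + n2 + n3 + n4 + p + i)) (alpha_M $ (n1 + n2 + n3 + n4 + p + i)) (kappa_M $ (n1 + n2 + n3 + n4 + p + i)))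
      * (\<Prod>i<N. dy_norm (psiM (n1 + n2 + n3 + n4 + p + r + i)) (alpha_M $ (n1 + n2 + n3 + n4 + p + r + i)) (kappa_M $ (n1 + n2 + n3 + n4 + p + r + i)))"
      unfolding P_def dimA prod_split_add ..
    also have "\<dots> > 0"
    proof (intro mult_pos_pos prod_pos)
      fix i assume "i \<in> {..<n1}"
      hence i: "i < n1" by simp
      have "sigma2 $ i > 0" using sigma2(2) i by simp
      thus "0 < dy_norm (psiM i) (alpha_M $ i) (kappa_M $ i)"
        using i z1 sigma2(1) ab ae
        by (intro dy_norm_pos) (simp add: alpha_M_def kappa_M_def psiM_def psi_M_def int_psi1)
    next
      fix i assume "i \<in> {..<n2}"
      hence i: "i < n2" by simp
      have "real (z2 $ i) + alpha_xi > 0" using alpha_xi by simp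
      thus "0 < dy_norm (psiM (n1 + i)) (alpha_M $ (n1 + i)) (kappa_M $ (n1 + i))"
        using i z1 z2 sigma2(1) ab ae
        by (intro dy_norm_pos) (simp add: alpha_M_def kappa_M_def psiM_def psi_M_def int_psi2)
    next
      fix i assume "i \<in> {..<n3}"
      hence i: "i < n3" by simp
      have a1: "real (z3 $ i) + alpha_xi > 0" using alpha_xi by simp
      have "real (z3 $ i) \<le> real (m $ i)" using m(2) i by simp
      hence a2: "real (z3 $ i) + alpha_xi < real (m $ i) + 2 * alpha_xi" using alpha_xi by simp
      show "0 < dy_norm (psiM (n1 + n2 + i)) (alpha_M $ (n1 + n2 + i)) (kappa_M $ (n1 + n2 + i))"
        using i z1 z2 z3 m(1) sigma2(1) ab ae int_psi3[OF a1 a2]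
        by (intro dy_norm_pos) (simp add: alpha_M_def kappa_M_def psiM_def psi_M_def)
    next
      fix i assume "i \<in> {..<n4}"
      hence i: "i < n4" by simp
      show "0 < dy_norm (psiM (n1 + n2 + n3 + i)) (alpha_M $ (n1 + n2 + n3 + i)) (kappa_M $ (n1 + n2 + n3 + i))"
        using i z1 z2 z3 m(1) sigma2(1) ab ae int_psi4[OF nu]
        by (intro dy_norm_pos) (simp add: alpha_M_def kappa_M_def psiM_def psi_M_def Neq)
    next
      fix i assume "i \<in> {..<p}"
      hence i: "i < p" by simp
      have "dy_valid (psib i) (alpha_b $ i) (kappa_b $ i)" using psib i by simp
      hence "integrable lborel (dy_kernel (psib i) (alpha_b $ i) (kappa_b $ i))" by (simp add: dy_valid_def)
      thus "0 < dy_norm (psiM (n1 + n2 + n3 + n4 + i)) (alpha_M $ (n1 + n2 + n3 + n4 + i)) (kappa_M $ (n1 + n2 + n3 + n4 + i))"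
        using i z1 z2 z3 m(1) sigma2(1) ab ae
        by (intro dy_norm_pos) (simp add: alpha_M_def kappa_M_def psiM_def psi_M_def Neq)
    next
      fix i assume "i \<in> {..<r}"
      hence i: "i < r" by simp
      have "dy_valid (psie i) (alpha_e $ i) (kappa_e $ i)" using psie i by simp
      hence "integrable lborel (dy_kernel (psie i) (alpha_e $ i) (kappa_e $ i))" by (simp add: dy_valid_def)
      thus "0 < dy_norm (psiM (n1 + n2 + n3 + n4 + p + i)) (alpha_M $ (n1 + n2 + n3 + n4 + p + i)) (kappa_M $ (n1 + n2 + n3 + n4 + p + i))"
        using i z1 z2 z3 m(1) sigma2(1) ab ae
        by (intro dy_norm_pos) (simp add: alpha_M_def kappa_M_def psiM_def psi_M_def Neq)
    next
      fix i assume "i \<in> {..<N}"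
      hence i: "i < N" by simp
      have "(1::real) / 2 > 0" by simp
      thus "0 < dy_norm (psiM (n1 + n2 + n3 + n4 + p + r + i)) (alpha_M $ (n1 + n2 + n3 + n4 + p + r + i)) (kappa_M $ (n1 + n2 + n3 + n4 + p + r + i))"
        using i z1 z2 z3 m(1) sigma2(1) ab ae
        by (intro dy_norm_pos) (simp add: alpha_M_def kappa_M_def psiM_def psi_M_def Neq int_psi1)
    qed
    finally show ?thesis .
  qed
  have I4pos: "(\<integral>u. t_kernel \<nu> u \<partial>lborel) > 0"
    unfolding t_kernel_eq[OF nu] by (rule integral_pos_lborel[OF int_psi4[OF nu]]) (simp add: dy_kernel_def)
  have Kpos: "Kc > 0"
  proof -
    have "K1 > 0" unfolding K1_def using sigma2(2) by (intro prod_pos) auto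
    moreover have "K2 > 0" unfolding K2_def by (intro prod_pos) auto
    moreover have "K3 > 0" unfolding K3_def using m(2) by (intro prod_pos) (auto simp: zero_less_binomial_iff)
    moreover have "K4 > 0" unfolding K4_def using I4pos by (intro prod_pos) auto
    moreover have "s2xi ^ N > 0" using s2xi by simp
    moreover have "\<bar>det Bm\<bar> > 0" using dB by simp
    ultimately show ?thesis unfolding Kc_def using Ppos by simp
  qed
  define post0 where "post0 = (\<lambda>xi beta eta q.
           let Qq = Q *\<^sub>v q;
               mu_D = - vec N (\<lambda>i. Qq $ i);
               mu_xi = - ((1 / s2xi) \<cdot>\<^sub>v vec N (\<lambda>i. Qq $ (N + p + r + i)));
               mu_b = - vec p (\<lambda>i. Qq $ (N + i));
               mu_e = - vec r (\<lambda>i. Qq $ (N + p + i));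
               zeta = xi @\<^sub>v beta @\<^sub>v eta;
               y = X *\<^sub>v beta + G *\<^sub>v eta + xi - mu_D;
               a_xi = 0\<^sub>v n1 @\<^sub>v vec n2 (\<lambda>_. alpha_xi) @\<^sub>v vec n3 (\<lambda>_. alpha_xi)
                      @\<^sub>v 0\<^sub>v (n4 + N);
               k_xi = 0\<^sub>v (n1 + n2) @\<^sub>v vec n3 (\<lambda>_. 2 * alpha_xi) @\<^sub>v 0\<^sub>v n4
                      @\<^sub>v vec N (\<lambda>_. 1 / 2);
               u = A_mat N p r X G s2xi *\<^sub>v zeta - (mu_D @\<^sub>v mu_xi);
               xi_factor = exp (scalar_prod a_xi u
                                - scalar_prod k_xi (psi_vec (psi_xi n1 n2 n3 N \<nu>) u))
           in \<integral>\<theta>. prior \<theta> * likelihood n1 n2 n3 n4 z1 z2 z3 z4 sigma2 m \<nu> y * xi_factor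
                   * dy_prior_factor (Db \<theta>) mu_b alpha_b kappa_b psib beta
                   * dy_prior_factor (De \<theta>) mu_e alpha_e kappa_e psie eta * 1 \<partial>M)"
  have main: "\<forall>xi \<in> carrier_vec N. \<forall>beta \<in> carrier_vec p. \<forall>eta \<in> carrier_vec r.
          \<forall>q \<in> carrier_vec N. post0 xi beta eta q
            = Kc * gcm_density M prior alpha_M kappa_M (Bm *\<^sub>v c) Bm Dt psiM (xi @\<^sub>v beta @\<^sub>v eta @\<^sub>v q)"
  proof (intro ballI)
    fix xi beta eta q :: "real vec"
    assume xi: "xi \<in> carrier_vec N" and beta: "beta \<in> carrier_vec p" and eta: "eta \<in> carrier_vec r"
      and q: "q \<in> carrier_vec N"
    define qq where "qq = Q *\<^sub>v q"
    define qa where "qa = vec N (\<lambda>i. qq $ i)"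
    define qb where "qb = vec p (\<lambda>i. qq $ (N + i))"
    define qe where "qe = vec r (\<lambda>i. qq $ (N + p + i))"
    define qx where "qx = vec N (\<lambda>i. qq $ (N + p + r + i))"
    define y where "y = X *\<^sub>v beta + G *\<^sub>v eta + xi - - qa"
    define h1 where "h1 = xi + (X *\<^sub>v beta + G *\<^sub>v eta)"
    define c1 where "c1 = 0\<^sub>v (n1 + n2 + n3) @\<^sub>v z4"
    define v1 where "v1 = y - c1"
    define v2 where "v2 = beta + qb"
    define v3 where "v3 = eta + qe"
    define v4 where "v4 = xi + qx"
    define wx where "wx = (1 / s2xi) \<cdot>\<^sub>v v4"
    define a_xi where "a_xi = 0\<^sub>v n1 @\<^sub>v vec n2 (\<lambda>_. alpha_xi) @\<^sub>v vec n3 (\<lambda>_. alpha_xi) @\<^sub>v 0\<^sub>v (n4 + N)"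
    define k_xi where "k_xi = 0\<^sub>v (n1 + n2) @\<^sub>v vec n3 (\<lambda>_. 2 * alpha_xi) @\<^sub>v 0\<^sub>v n4 @\<^sub>v vec N (\<lambda>_. 1 / (2::real))"
    define E1 where "E1 = (\<Sum>i<n1. z1 $ i / sigma2 $ i * y $ i - 1 / (2 * sigma2 $ i) * psi1 (y $ i))"
    define E2 where "E2 = (\<Sum>i<n2. real (z2 $ i) * y $ (n1 + i) - 1 * psi2 (y $ (n1 + i)))"
    define E3 where "E3 = (\<Sum>i<n3. real (z3 $ i) * y $ (n1 + n2 + i) - real (m $ i) * psi3 (y $ (n1 + n2 + i)))"
    define E4 where "E4 = (\<Sum>i<n4. 0 * (y $ (n1 + n2 + n3 + i) - z4 $ i) - (\<nu> + 1) / 2 * psi4 \<nu> (y $ (n1 + n2 + n3 + i) - z4 $ i))"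
    have qqc: "qq \<in> carrier_vec (2 * N + p + r)" using Q(1) q by (simp add: qq_def)
    have qac: "qa \<in> carrier_vec N" and qbc: "qb \<in> carrier_vec p" and qec: "qe \<in> carrier_vec r" and qxc: "qx \<in> carrier_vec N"
      by (simp_all add: qa_def qb_def qe_def qx_def)
    have qsplit: "qq = qa @\<^sub>v qb @\<^sub>v qe @\<^sub>v qx"
      using qqc by (intro eq_vecI) (auto simp: qa_def qb_def qe_def qx_def)
    have h1c: "h1 \<in> carrier_vec N" using xi beta eta XG by (simp add: h1_def)
    have yc: "y \<in> carrier_vec N" using xi beta eta XG qac by (simp add: y_def)
    have dy: "dim_vec y = n1 + n2 + n3 + n4" using yc Neq by simp
    have c1c: "c1 \<in> carrier_vec N" using z4 Neq by (simp add: c1_def)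
    have v1c: "v1 \<in> carrier_vec N" and v2c: "v2 \<in> carrier_vec p" and v3c: "v3 \<in> carrier_vec r" and v4c: "v4 \<in> carrier_vec N"
      using yc c1c beta qbc eta qec xi qxc by (simp_all add: v1_def v2_def v3_def v4_def)
    have wxc: "wx \<in> carrier_vec N" using v4c by (simp add: wx_def)
    have csplit: "c = c1 @\<^sub>v 0\<^sub>v p @\<^sub>v 0\<^sub>v r @\<^sub>v 0\<^sub>v N"
      using z4 by (intro eq_vecI) (auto simp: c_def c1_def Neq)
    have dz4: "dim_vec z4 = n4" using z4 by simp
    have cc: "c \<in> carrier_vec (2 * N + p + r)" unfolding carrier_vec_def using dz4 by (simp add: c_def Neq)
    have zc: "xi @\<^sub>v beta @\<^sub>v eta \<in> carrier_vec (N + p + r)" using xi beta eta by (simp add: add.assoc)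
    have zq: "xi @\<^sub>v beta @\<^sub>v eta @\<^sub>v q = (xi @\<^sub>v beta @\<^sub>v eta) @\<^sub>v q" by (simp add: append_vec_assoc)
    have zqc: "(xi @\<^sub>v beta @\<^sub>v eta) @\<^sub>v q \<in> carrier_vec (2 * N + p + r)"
    proof -
      have "(xi @\<^sub>v beta @\<^sub>v eta) @\<^sub>v q \<in> carrier_vec (N + p + r + N)" using zc q by (rule append_carrier_vec)
      moreover have "N + p + r + N = 2 * N + p + r" by simp
      ultimately show ?thesis by simp
    qed
    have Bmc: "Bm *\<^sub>v c \<in> carrier_vec (2 * N + p + r)" using Bc cc by simp
    have V: "minv Bm *\<^sub>v ((xi @\<^sub>v beta @\<^sub>v eta @\<^sub>v q) - Bm *\<^sub>v c) = v1 @\<^sub>v v2 @\<^sub>v v3 @\<^sub>v v4"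
    proof -
      have "minv Bm *\<^sub>v ((xi @\<^sub>v beta @\<^sub>v eta @\<^sub>v q) - Bm *\<^sub>v c) = W *\<^sub>v ((xi @\<^sub>v beta @\<^sub>v eta) @\<^sub>v q) - W *\<^sub>v (Bm *\<^sub>v c)"
        unfolding mB zq by (rule mult_minus_distrib_mat_vec[OF Wc zqc Bmc])
      also have "W *\<^sub>v (Bm *\<^sub>v c) = c"
        using assoc_mult_mat_vec[OF Wc Bc cc] WB cc by simp
      also have "W *\<^sub>v ((xi @\<^sub>v beta @\<^sub>v eta) @\<^sub>v q) = (h1 @\<^sub>v beta @\<^sub>v eta @\<^sub>v xi) + qq"
        unfolding W_def hcat_mult_vec[OF Hc Q(1) zc q] HP(2)[OF xi beta eta] h1_def qq_def ..
      also have "(h1 @\<^sub>v beta @\<^sub>v eta @\<^sub>v xi) + qq = (h1 + qa) @\<^sub>v (beta + qb) @\<^sub>v (eta + qe) @\<^sub>v (xi + qx)"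
      proof -
        have a3: "(eta @\<^sub>v xi) + (qe @\<^sub>v qx) = (eta + qe) @\<^sub>v (xi + qx)" by (rule append_vec_add[OF eta qec xi qxc])
        have a2: "(beta @\<^sub>v eta @\<^sub>v xi) + (qb @\<^sub>v qe @\<^sub>v qx) = (beta + qb) @\<^sub>v ((eta @\<^sub>v xi) + (qe @\<^sub>v qx))"
          by (rule append_vec_add[OF beta qbc]) (use eta xi qec qxc in auto)
        have a1: "(h1 @\<^sub>v beta @\<^sub>v eta @\<^sub>v xi) + (qa @\<^sub>v qb @\<^sub>v qe @\<^sub>v qx) = (h1 + qa) @\<^sub>v ((beta @\<^sub>v eta @\<^sub>v xi) + (qb @\<^sub>v qe @\<^sub>v qx))"
          by (rule append_vec_add[OF h1c qac]) (use beta eta xi qbc qec qxc in auto)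
        show ?thesis unfolding qsplit a1 a2 a3 ..
      qed
      also have "\<dots> - c = ((h1 + qa) - c1) @\<^sub>v ((beta + qb) - 0\<^sub>v p) @\<^sub>v ((eta + qe) - 0\<^sub>v r) @\<^sub>v ((xi + qx) - 0\<^sub>v N)"
      proof -
        have m3: "((eta + qe) @\<^sub>v (xi + qx)) - (0\<^sub>v r @\<^sub>v 0\<^sub>v N) = ((eta + qe) - 0\<^sub>v r) @\<^sub>v ((xi + qx) - 0\<^sub>v N)"
          by (rule append_vec_minus[of _ r _ _ N]) (use eta xi qec qxc in auto)
        have m2: "((beta + qb) @\<^sub>v (eta + qe) @\<^sub>v (xi + qx)) - (0\<^sub>v p @\<^sub>v 0\<^sub>v r @\<^sub>v 0\<^sub>v N) = ((beta + qb) - 0\<^sub>v p) @\<^sub>v (((eta + qe) @\<^sub>v (xi + qx)) - (0\<^sub>v r @\<^sub>v 0\<^sub>v N))"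
          by (rule append_vec_minus[of _ p _ _ "r + N"]) (use beta eta xi qbc qec qxc in auto)
        have m1: "((h1 + qa) @\<^sub>v (beta + qb) @\<^sub>v (eta + qe) @\<^sub>v (xi + qx)) - (c1 @\<^sub>v 0\<^sub>v p @\<^sub>v 0\<^sub>v r @\<^sub>v 0\<^sub>v N) = ((h1 + qa) - c1) @\<^sub>v (((beta + qb) @\<^sub>v (eta + qe) @\<^sub>v (xi + qx)) - (0\<^sub>v p @\<^sub>v 0\<^sub>v r @\<^sub>v 0\<^sub>v N))"
          by (rule append_vec_minus[of _ N _ _ "p + (r + N)"]) (use h1c qac c1c beta eta xi qbc qec qxc in auto)
        show ?thesis unfolding csplit m1 m2 m3 ..
      qed
      also have "\<dots> = v1 @\<^sub>v v2 @\<^sub>v v3 @\<^sub>v v4"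
      proof -
        have "h1 + qa - c1 = v1" unfolding v1_def y_def h1_def
          using xi beta eta XG qac c1c by (intro eq_vecI) auto
        moreover have "beta + qb - 0\<^sub>v p = v2" unfolding v2_def using beta qbc by simp
        moreover have "eta + qe - 0\<^sub>v r = v3" unfolding v3_def using eta qec by simp
        moreover have "xi + qx - 0\<^sub>v N = v4" unfolding v4_def using xi qxc by simp
        ultimately show ?thesis by simp
      qed
      finally show ?thesis .
    qed
    have U: "A_mat N p r X G s2xi *\<^sub>v (xi @\<^sub>v beta @\<^sub>v eta) - (- qa @\<^sub>v - ((1 / s2xi) \<cdot>\<^sub>v qx)) = y @\<^sub>v wx"
    proof -
      have be: "beta @\<^sub>v eta \<in> carrier_vec (p + r)" using beta eta by simp
      have zc': "xi @\<^sub>v beta @\<^sub>v eta \<in> carrier_vec (N + (p + r))" using xi be by simp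
      have r1: "hcat (1\<^sub>m N) (hcat X G) *\<^sub>v (xi @\<^sub>v beta @\<^sub>v eta) = h1"
        unfolding h1_def using xi beta eta XG be
        by (simp add: hcat_mult_vec[OF one_carrier_mat hcat_carrier[OF XG] xi be] hcat_mult_vec[OF XG beta eta])
      have r2: "hcat ((1 / s2xi) \<cdot>\<^sub>m 1\<^sub>m N) (hcat (0\<^sub>m N p) (0\<^sub>m N r)) *\<^sub>v (xi @\<^sub>v beta @\<^sub>v eta) = (1 / s2xi) \<cdot>\<^sub>v xi"
        using xi beta eta be
        by (simp add: hcat_mult_vec[OF smult_carrier_mat[OF one_carrier_mat] hcat_carrier[OF zero_carrier_mat zero_carrier_mat] xi be]
            hcat_mult_vec[OF zero_carrier_mat zero_carrier_mat beta eta] smult_one_mult_vec[OF xi])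
      have ca: "hcat (1\<^sub>m N) (hcat X G) \<in> carrier_mat N (N + (p + r))" using XG by auto
      have cb: "hcat ((1 / s2xi) \<cdot>\<^sub>m 1\<^sub>m N) (hcat (0\<^sub>m N p) (0\<^sub>m N r)) \<in> carrier_mat N (N + (p + r))" by auto
      have "A_mat N p r X G s2xi *\<^sub>v (xi @\<^sub>v beta @\<^sub>v eta) = h1 @\<^sub>v ((1 / s2xi) \<cdot>\<^sub>v xi)"
        unfolding A_mat_def append_rows_mult_vec[OF ca cb zc'] r1 r2 ..
      also have "\<dots> - (- qa @\<^sub>v - ((1 / s2xi) \<cdot>\<^sub>v qx)) = (h1 - - qa) @\<^sub>v ((1 / s2xi) \<cdot>\<^sub>v xi - - ((1 / s2xi) \<cdot>\<^sub>v qx))"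
        by (rule append_vec_minus[of _ N _ _ N]) (use h1c qac xi qxc in auto)
      also have "h1 - - qa = y" unfolding y_def h1_def
        using xi beta eta XG qac by (intro eq_vecI) auto
      also have "(1 / s2xi) \<cdot>\<^sub>v xi - - ((1 / s2xi) \<cdot>\<^sub>v qx) = wx" unfolding wx_def v4_def
        using xi qxc by (intro eq_vecI) (auto simp: algebra_simps)
      finally show ?thesis .
    qed
    have LIK: "likelihood n1 n2 n3 n4 z1 z2 z3 z4 sigma2 m \<nu> y = K1 * K2 * K3 * K4 * exp (E1 + E2 + E3 + E4)"
    proof -
      have L1: "(\<Prod>i<n1. normal_pdf (y $ i) (sigma2 $ i) (z1 $ i)) = K1 * exp E1"
        unfolding K1_def E1_def by (rule prod_exp_factor) (use sigma2(2) normal_factor in auto)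
      have L2: "(\<Prod>i<n2. poisson_pmf (exp (y $ (n1 + i))) (z2 $ i)) = K2 * exp E2"
        unfolding K2_def E2_def by (rule prod_exp_factor) (rule poisson_factor)
      have L3: "(\<Prod>i<n3. binomial_pmf_real (m $ i) (exp (y $ (n1 + n2 + i)) / (1 + exp (y $ (n1 + n2 + i)))) (z3 $ i)) = K3 * exp E3"
        unfolding K3_def E3_def by (rule prod_exp_factor) (use m(2) binom_factor in auto)
      have L4: "(\<Prod>i<n4. t_pdf \<nu> (y $ (n1 + n2 + n3 + i)) (z4 $ i)) = K4 * exp E4"
        unfolding K4_def E4_def by (rule prod_exp_factor) (rule t_factor[OF nu])
      show ?thesis unfolding likelihood_def L1 L2 L3 L4 by (simp add: exp_add mult_ac)
    qed
    show "post0 xi beta eta q = Kc * gcm_density M prior alpha_M kappa_M (Bm *\<^sub>v c) Bm Dt psiM (xi @\<^sub>v beta @\<^sub>v eta @\<^sub>v q)"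
      unfolding post0_def Let_def gcm_density_def qq_def[symmetric] qa_def[symmetric] qb_def[symmetric] qe_def[symmetric]
        qx_def[symmetric] y_def[symmetric] a_xi_def[symmetric] k_xi_def[symmetric] P_def[symmetric] V U LIK
    proof (rule trans[OF _ integral_mult_right_zero], rule Bochner_Integration.integral_cong[OF refl])
      fix \<theta> assume \<theta>: "\<theta> \<in> space M"
      show "prior \<theta> * (K1 * K2 * K3 * K4 * exp (E1 + E2 + E3 + E4)) *
          exp (a_xi \<bullet> (y @\<^sub>v wx) - k_xi \<bullet> psi_vec (psi_xi n1 n2 n3 N \<nu>) (y @\<^sub>v wx)) *
          dy_prior_factor (Db \<theta>) (- qb) alpha_b kappa_b psib beta *
          dy_prior_factor (De \<theta>) (- qe) alpha_e kappa_e psie eta * 1 =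
          Kc * (prior \<theta> * P / (\<bar>det (Dt \<theta>)\<bar> * \<bar>det Bm\<bar>) *
          exp (alpha_M \<bullet> (minv (Dt \<theta>) *\<^sub>v (v1 @\<^sub>v v2 @\<^sub>v v3 @\<^sub>v v4)) -
               kappa_M \<bullet> psi_vec psiM (minv (Dt \<theta>) *\<^sub>v (v1 @\<^sub>v v2 @\<^sub>v v3 @\<^sub>v v4))))"
      proof -
        have Dbt: "Db \<theta> \<in> carrier_mat p p" "invertible_mat (Db \<theta>)" using Db \<theta> by auto
        have Det: "De \<theta> \<in> carrier_mat r r" "invertible_mat (De \<theta>)" using De \<theta> by auto
        note DP = D_mat_props[OF Dbt Det s2xi, where N=N]
        note ib = invertible_minv[OF Dbt]
        note ie = invertible_minv[OF Det]
        define wb where "wb = minv (Db \<theta>) *\<^sub>v v2"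
        define we where "we = minv (De \<theta>) *\<^sub>v v3"
        define w where "w = v1 @\<^sub>v wb @\<^sub>v we @\<^sub>v wx"
        have wbc: "wb \<in> carrier_vec p" using ib(3) v2c by (simp add: wb_def)
        have wec: "we \<in> carrier_vec r" using ie(3) v3c by (simp add: we_def)
        have wsplit: "minv (Dt \<theta>) *\<^sub>v (v1 @\<^sub>v v2 @\<^sub>v v3 @\<^sub>v v4) = w"
          unfolding Dt_def w_def wb_def we_def wx_def by (rule DP(3)[OF v1c v2c v3c v4c])
        have detD: "det (Dt \<theta>) = det (Db \<theta>) * det (De \<theta>) * s2xi ^ N" unfolding Dt_def by (rule DP(2))
        define Sb where "Sb = alpha_b \<bullet> wb - kappa_b \<bullet> psi_vec psib wb"
        define Se where "Se = alpha_e \<bullet> we - kappa_e \<bullet> psi_vec psie we"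
        define Sx where "Sx = a_xi \<bullet> (y @\<^sub>v wx) - k_xi \<bullet> psi_vec (psi_xi n1 n2 n3 N \<nu>) (y @\<^sub>v wx)"
        have fb: "dy_prior_factor (Db \<theta>) (- qb) alpha_b kappa_b psib beta = exp Sb / \<bar>det (Db \<theta>)\<bar>"
        proof -
          have "beta - - qb = v2" unfolding v2_def using beta qbc by (intro eq_vecI) auto
          thus ?thesis unfolding dy_prior_factor_def Let_def Sb_def wb_def by simp
        qed
        have fe: "dy_prior_factor (De \<theta>) (- qe) alpha_e kappa_e psie eta = exp Se / \<bar>det (De \<theta>)\<bar>"
        proof -
          have "eta - - qe = v3" unfolding v3_def using eta qec by (intro eq_vecI) auto
          thus ?thesis unfolding dy_prior_factor_def Let_def Se_def we_def by simp
        qed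
        have EXP: "alpha_M \<bullet> w - kappa_M \<bullet> psi_vec psiM w = E1 + E2 + E3 + E4 + Sx + Sb + Se"
        proof -
          have dims: "dim_vec z1 = n1" "dim_vec sigma2 = n1" "dim_vec z2 = n2" "dim_vec z3 = n3" "dim_vec m = n3"
            "dim_vec z4 = n4" "dim_vec alpha_b = p" "dim_vec kappa_b = p" "dim_vec alpha_e = r" "dim_vec kappa_e = r"
            "dim_vec y = n1 + n2 + n3 + n4" "dim_vec wb = p" "dim_vec we = r" "dim_vec wx = n1 + n2 + n3 + n4"
            "dim_vec v1 = n1 + n2 + n3 + n4"
            using z1 sigma2(1) z2 z3 m(1) z4 ab ae yc wbc wec wxc v1c Neq by auto
          define G where "G = (\<lambda>l. alpha_M $ l * w $ l - kappa_M $ l * psiM l (w $ l))"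
          define Hh where "Hh = (\<lambda>l. a_xi $ l * (y @\<^sub>v wx) $ l - k_xi $ l * psi_xi n1 n2 n3 N \<nu> l ((y @\<^sub>v wx) $ l))"
          have dw: "dim_vec w = n1 + n2 + n3 + n4 + p + r + N" using dims by (simp add: w_def Neq)
          have dk: "dim_vec kappa_M = n1 + n2 + n3 + n4 + p + r + N" using dims by (simp add: kappa_M_def)
          have e0: "alpha_M \<bullet> w - kappa_M \<bullet> psi_vec psiM w = (\<Sum>l<n1 + n2 + n3 + n4 + p + r + N. G l)"
            unfolding G_def by (subst exp_sum_form) (simp_all add: dimA dk dw)
          have duw: "dim_vec (y @\<^sub>v wx) = n1 + n2 + n3 + n4 + N" using dims by (simp add: Neq)
          have da: "dim_vec a_xi = n1 + n2 + n3 + n4 + N" by (simp add: a_xi_def)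
          have dkx: "dim_vec k_xi = n1 + n2 + n3 + n4 + N" by (simp add: k_xi_def)
          have ex: "Sx = (\<Sum>l<n1 + n2 + n3 + n4 + N. Hh l)"
          proof -
            have "Sx = (\<Sum>l<dim_vec (y @\<^sub>v wx). Hh l)"
              unfolding Hh_def Sx_def by (rule exp_sum_form) (simp_all only: duw da dkx)
            thus ?thesis unfolding duw .
          qed
          have eb: "Sb = (\<Sum>i<p. alpha_b $ i * wb $ i - kappa_b $ i * psib i (wb $ i))"
            unfolding Sb_def by (subst exp_sum_form) (simp_all add: dims)
          have ee: "Se = (\<Sum>i<r. alpha_e $ i * we $ i - kappa_e $ i * psie i (we $ i))"
            unfolding Se_def by (subst exp_sum_form) (simp_all add: dims)
          have B1: "(\<Sum>i<n1. G i) = E1" unfolding E1_def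
            by (rule sum.cong[OF refl]) (simp add: G_def alpha_M_def kappa_M_def w_def v1_def c1_def psiM_def psi_M_def dims Neq)
          have B2: "(\<Sum>i<n2. G (n1 + i)) = E2 + (\<Sum>i<n2. Hh (n1 + i))" unfolding E2_def sum.distrib[symmetric]
            by (rule sum.cong[OF refl]) (simp add: G_def Hh_def alpha_M_def kappa_M_def w_def v1_def c1_def psiM_def psi_M_def
                a_xi_def k_xi_def psi_xi_def dims Neq algebra_simps)
          have B3: "(\<Sum>i<n3. G (n1 + n2 + i)) = E3 + (\<Sum>i<n3. Hh (n1 + n2 + i))" unfolding E3_def sum.distrib[symmetric]
            by (rule sum.cong[OF refl]) (simp add: G_def Hh_def alpha_M_def kappa_M_def w_def v1_def c1_def psiM_def psi_M_def
                a_xi_def k_xi_def psi_xi_def dims Neq algebra_simps)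
          have B4: "(\<Sum>i<n4. G (n1 + n2 + n3 + i)) = E4" unfolding E4_def
            by (rule sum.cong[OF refl]) (simp add: G_def alpha_M_def kappa_M_def w_def v1_def c1_def psiM_def psi_M_def dims Neq)
          have B5: "(\<Sum>i<p. G (n1 + n2 + n3 + n4 + i)) = Sb" unfolding eb
            by (rule sum.cong[OF refl]) (simp add: G_def alpha_M_def kappa_M_def w_def psiM_def psi_M_def dims Neq)
          have B6: "(\<Sum>i<r. G (n1 + n2 + n3 + n4 + p + i)) = Se" unfolding ee
            by (rule sum.cong[OF refl]) (simp add: G_def alpha_M_def kappa_M_def w_def psiM_def psi_M_def dims Neq)
          have B7: "(\<Sum>i<N. G (n1 + n2 + n3 + n4 + p + r + i)) = (\<Sum>i<N. Hh (n1 + n2 + n3 + n4 + i))"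
            by (rule sum.cong[OF refl]) (simp add: G_def Hh_def alpha_M_def kappa_M_def w_def psiM_def psi_M_def
                a_xi_def k_xi_def psi_xi_def dims Neq)
          have X1: "(\<Sum>i<n1. Hh i) = 0"
            by (rule sum.neutral) (simp add: Hh_def a_xi_def k_xi_def dims Neq)
          have X4: "(\<Sum>i<n4. Hh (n1 + n2 + n3 + i)) = 0"
            by (rule sum.neutral) (simp add: Hh_def a_xi_def k_xi_def dims Neq)
          have "alpha_M \<bullet> w - kappa_M \<bullet> psi_vec psiM w = (\<Sum>i<n1. G i) + (\<Sum>i<n2. G (n1 + i)) + (\<Sum>i<n3. G (n1 + n2 + i))
             + (\<Sum>i<n4. G (n1 + n2 + n3 + i)) + (\<Sum>i<p. G (n1 + n2 + n3 + n4 + i)) + (\<Sum>i<r. G (n1 + n2 + n3 + n4 + p + i))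
             + (\<Sum>i<N. G (n1 + n2 + n3 + n4 + p + r + i))"
            unfolding e0 sum_split_add ..
          moreover have "Sx = (\<Sum>i<n1. Hh i) + (\<Sum>i<n2. Hh (n1 + i)) + (\<Sum>i<n3. Hh (n1 + n2 + i))
             + (\<Sum>i<n4. Hh (n1 + n2 + n3 + i)) + (\<Sum>i<N. Hh (n1 + n2 + n3 + n4 + i))"
            unfolding ex sum_split_add ..
          ultimately show ?thesis using B1 B2 B3 B4 B5 B6 B7 X1 X4 by linarith
        qed
        show ?thesis unfolding wsplit detD fb fe Sx_def[symmetric] EXP Kc_def
          by (rule final_alg[OF Ppos dB s2xi ib(4) ie(4)])
      qed
    qed
  qed
  show ?thesis unfolding Let_def alpha_M_def[symmetric] kappa_M_def[symmetric] c_def[symmetric] psiM_def[symmetric]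
      Bm_def[symmetric] W_def[symmetric] mW Dt_def[symmetric]
    using Kpos main[unfolded post0_def Let_def] by blast
qed

end
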